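(* Let $X\in\mathscr K$ and $U\in L^2(\Omega)$, and let $\mathcal U(m)=\int_0^mU(\omega)\,d\omega$. Then $U-\operatorname{Proj}_{\mathscr H_X}U\in N_X\mathscr K$, or equivalently $\operatorname{Proj}_{\mathscr H_X}U=\operatorname{Proj}_{T_X\mathscr K}U$, if and only if $$(\operatorname{Proj}_{\mathscr H_X}U)(m)\le\frac{\mathcal U(m)-\mathcal U(m_l)}{m-m_l}$$ for every $m\in(m_l,m_r)$ and every maximal interval $(m_l,m_r)$ of $\Omega_X$.
   Context: $\Omega=(0,1)$ with Lebesgue measure. $\mathscr K=\{X\in L^2(\Omega):X\text{ nondecreasing}\}$, a closed convex cone. $N_X\mathscr K=\{W\in L^2(\Omega):\int_\Omega W(Y-X)\,dm\le0\ \forall Y\in\mathscr K\}$ is the normal cone; $T_X\mathscr K=\{U\in L^2(\Omega):\int_\Omega UW\,dm\le0\ \forall W\in N_X\mathscr K\}$ is the tangent cone, and $\operatorname{Proj}_{T_X\mathscr K}$ the metric projection onto it. $\Omega_X=\{m\in\Omega:X\text{ is constant in a neighborhood of }m\}$, a countable disjoint union of maximal open intervals. $\mathscr H_X=\{U\in L^2(\Omega):U\text{ constant on each interval }(m_l,m_r)\subset\Omega_X\}$, with orthogonal projection $\operatorname{Proj}_{\mathscr H_X}U$ equal to $U$ a.e. off $\Omega_X$ and to the average of $U$ over each maximal interval of $\Omega_X$ on that interval. *)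

theory Defs
  imports "HOL-Analysis.Analysis"
begin

text \<open>The probability space Omega = (0,1) with Lebesgue measure. Elements of L^2 are
represented by real functions; equality in L^2 is a.e. equality.\<close>

definition Om :: "real set" where
  "Om = {0<..<1}"

definition L2 :: "(real \<Rightarrow> real) set" where
  "L2 = {f. set_borel_measurable lebesgue Om f \<and> set_integrable lebesgue Om (\<lambda>x. (f x)\<^sup>2)}"

definition ip :: "(real \<Rightarrow> real) \<Rightarrow> (real \<Rightarrow> real) \<Rightarrow> real" where
  "ip f g = (LINT x:Om|lebesgue. f x * g x)"

definition Kcone :: "(real \<Rightarrow> real) set" where
  "Kcone = {X \<in> L2. mono_on Om X}"

definition normal_cone :: "(real \<Rightarrow> real) \<Rightarrow> (real \<Rightarrow> real) set" where
  "normal_cone X = {W \<in> L2. \<forall>Y\<in>Kcone. ip W (\<lambda>x. Y x - X x) \<le> 0}"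

definition tangent_cone :: "(real \<Rightarrow> real) \<Rightarrow> (real \<Rightarrow> real) set" where
  "tangent_cone X = {U \<in> L2. \<forall>W\<in>normal_cone X. ip U W \<le> 0}"

definition is_proj :: "(real \<Rightarrow> real) set \<Rightarrow> (real \<Rightarrow> real) \<Rightarrow> (real \<Rightarrow> real) \<Rightarrow> bool" where
  "is_proj T U P \<longleftrightarrow> P \<in> T \<and>
     (\<forall>V\<in>T. ip (\<lambda>x. U x - P x) (\<lambda>x. U x - P x) \<le> ip (\<lambda>x. U x - V x) (\<lambda>x. U x - V x))"

definition OmX :: "(real \<Rightarrow> real) \<Rightarrow> real set" where
  "OmX X = {m \<in> Om. \<exists>e>0. ball m e \<subseteq> Om \<and> (\<forall>y\<in>ball m e. X y = X m)}"

definition max_int :: "(real \<Rightarrow> real) \<Rightarrow> real \<Rightarrow> real \<Rightarrow> bool" where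
  "max_int X a b \<longleftrightarrow> a < b \<and> {a<..<b} \<subseteq> OmX X \<and> a \<notin> OmX X \<and> b \<notin> OmX X"

text \<open>Orthogonal projection onto H_X: averages over maximal intervals of OmX X.\<close>
definition projH :: "(real \<Rightarrow> real) \<Rightarrow> (real \<Rightarrow> real) \<Rightarrow> real \<Rightarrow> real" where
  "projH X U m =
     (if \<exists>a b. max_int X a b \<and> m \<in> {a<..<b}
      then (let (a, b) = (SOME (a, b). max_int X a b \<and> m \<in> {a<..<b})
            in (LINT w:{a<..<b}|lebesgue. U w) / (b - a))
      else U m)"

end

theory Submission
  imports Defs
begin

lemma Om_sets[measurable]: "Om \<in> sets lebesgue"
  unfolding Om_def by simp

lemma Om_lmeas: "Om \<in> lmeasurable"
  unfolding Om_def by simp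

lemma Om_fin: "emeasure lebesgue Om < \<infinity>"
  using Om_lmeas by (simp add: fmeasurable_def)

lemma ind_Om_integrable: "integrable lebesgue (indicat_real Om)"
  using Om_lmeas lmeasurable_iff_integrable by blast

lemma L2_D:
  assumes "f \<in> L2"
  shows "(\<lambda>x. indicat_real Om x * f x) \<in> borel_measurable lebesgue"
    "integrable lebesgue (\<lambda>x. indicat_real Om x * (f x)\<^sup>2)"
  using assms unfolding L2_def set_borel_measurable_def set_integrable_def by auto

lemma L2_I:
  assumes "(\<lambda>x. indicat_real Om x * f x) \<in> borel_measurable lebesgue"
    "integrable lebesgue (\<lambda>x. indicat_real Om x * (f x)\<^sup>2)"
  shows "f \<in> L2"
  using assms unfolding L2_def set_borel_measurable_def set_integrable_def by auto

lemma ind_sq: "indicat_real A x * (f x)\<^sup>2 = (indicat_real A x * f x)\<^sup>2"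
  by (simp add: indicator_def power2_eq_square)

lemma L2_mult_int:
  assumes "f \<in> L2" "g \<in> L2"
  shows "set_integrable lebesgue Om (\<lambda>x. f x * g x)"
  unfolding set_integrable_def
proof (rule Bochner_Integration.integrable_bound)
  show "integrable lebesgue (\<lambda>x. indicat_real Om x * (f x)\<^sup>2 + indicat_real Om x * (g x)\<^sup>2)"
    using L2_D(2)[OF assms(1)] L2_D(2)[OF assms(2)] by simp
  have "(\<lambda>x. (indicat_real Om x * f x) * (indicat_real Om x * g x)) \<in> borel_measurable lebesgue"
    using L2_D(1)[OF assms(1)] L2_D(1)[OF assms(2)] by simp
  moreover have "(\<lambda>x. (indicat_real Om x * f x) * (indicat_real Om x * g x)) = (\<lambda>x. indicat_real Om x *\<^sub>R (f x * g x))"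
    by (auto simp: indicator_def fun_eq_iff)
  ultimately show "(\<lambda>x. indicat_real Om x *\<^sub>R (f x * g x)) \<in> borel_measurable lebesgue" by simp
  show "AE x in lebesgue. norm (indicat_real Om x *\<^sub>R (f x * g x)) \<le> norm (indicat_real Om x * (f x)\<^sup>2 + indicat_real Om x * (g x)\<^sup>2)"
  proof (intro AE_I2)
    fix x
    have "\<bar>f x * g x\<bar> \<le> (f x)\<^sup>2 + (g x)\<^sup>2"
      proof -
      have "0 \<le> (\<bar>f x\<bar> - \<bar>g x\<bar>)\<^sup>2" by simp
      then have "2 * (\<bar>f x\<bar> * \<bar>g x\<bar>) \<le> (f x)\<^sup>2 + (g x)\<^sup>2"
        by (simp add: power2_eq_square algebra_simps)
      moreover have "0 \<le> \<bar>f x\<bar> * \<bar>g x\<bar>" by simp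
      ultimately show ?thesis unfolding abs_mult by linarith
    qed
    then show "norm (indicat_real Om x *\<^sub>R (f x * g x)) \<le> norm (indicat_real Om x * (f x)\<^sup>2 + indicat_real Om x * (g x)\<^sup>2)"
      by (auto simp: indicator_def)
  qed
qed

lemma const_L2: "(\<lambda>x. c) \<in> L2"
proof (rule L2_I)
  show "(\<lambda>x. indicat_real Om x * c) \<in> borel_measurable lebesgue" by simp
  show "integrable lebesgue (\<lambda>x. indicat_real Om x * c\<^sup>2)"
    using ind_Om_integrable by simp
qed

lemma L2_int:
  assumes "f \<in> L2"
  shows "set_integrable lebesgue Om f"
  using L2_mult_int[OF assms const_L2[of 1]] by simp

lemma L2_add:
  assumes "f \<in> L2" "g \<in> L2"
  shows "(\<lambda>x. f x + g x) \<in> L2"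
proof (rule L2_I)
  show "(\<lambda>x. indicat_real Om x * (f x + g x)) \<in> borel_measurable lebesgue"
    using L2_D(1)[OF assms(1)] L2_D(1)[OF assms(2)] by (simp add: distrib_left)
  have "integrable lebesgue (\<lambda>x. indicat_real Om x * (f x)\<^sup>2 + indicat_real Om x * (g x)\<^sup>2 + 2 * (indicat_real Om x * (f x * g x)))"
    using L2_D(2)[OF assms(1)] L2_D(2)[OF assms(2)] L2_mult_int[OF assms] unfolding set_integrable_def by simp
  moreover have "(\<lambda>x. indicat_real Om x * (f x)\<^sup>2 + indicat_real Om x * (g x)\<^sup>2 + 2 * (indicat_real Om x * (f x * g x)))
     = (\<lambda>x. indicat_real Om x * (f x + g x)\<^sup>2)"
    by (auto simp: fun_eq_iff power2_eq_square algebra_simps)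
  ultimately show "integrable lebesgue (\<lambda>x. indicat_real Om x * (f x + g x)\<^sup>2)" by simp
qed

lemma L2_scale:
  assumes "f \<in> L2"
  shows "(\<lambda>x. c * f x) \<in> L2"
proof (rule L2_I)
  show "(\<lambda>x. indicat_real Om x * (c * f x)) \<in> borel_measurable lebesgue"
    using L2_D(1)[OF assms] borel_measurable_times[OF borel_measurable_const[of c]] 
    by (metis (no_types, lifting) ext borel_measurable_scaleR mult.left_commute real_scaleR_def)
  have "integrable lebesgue (\<lambda>x. c\<^sup>2 * (indicat_real Om x * (f x)\<^sup>2))"
    using L2_D(2)[OF assms] by simp
  then show "integrable lebesgue (\<lambda>x. indicat_real Om x * (c * f x)\<^sup>2)"
    by (simp add: power_mult_distrib mult_ac)
qed

lemma L2_diff: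
  assumes "f \<in> L2" "g \<in> L2"
  shows "(\<lambda>x. f x - g x) \<in> L2"
  using L2_add[OF assms(1) L2_scale[OF assms(2), of "-1"]] by simp

lemma L2_bounded:
  assumes "(\<lambda>x. indicat_real Om x * f x) \<in> borel_measurable lebesgue"
    and "\<And>x. x \<in> Om \<Longrightarrow> \<bar>f x\<bar> \<le> B"
  shows "f \<in> L2"
proof (rule L2_I[OF assms(1)])
  have m: "(\<lambda>x. indicat_real Om x * (f x)\<^sup>2) \<in> borel_measurable lebesgue"
  proof -
    have "(\<lambda>x. (indicat_real Om x * f x)\<^sup>2) \<in> borel_measurable lebesgue" using assms(1) by simp
    then show ?thesis by (simp add: ind_sq)
  qed
  show "integrable lebesgue (\<lambda>x. indicat_real Om x * (f x)\<^sup>2)"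
  proof (rule Bochner_Integration.integrable_bound[OF _ m])
    show "integrable lebesgue (\<lambda>x. indicat_real Om x * B\<^sup>2)" using ind_Om_integrable by simp
    show "AE x in lebesgue. norm (indicat_real Om x * (f x)\<^sup>2) \<le> norm (indicat_real Om x * B\<^sup>2)"
    proof (intro AE_I2)
      fix x
      have "x \<in> Om \<Longrightarrow> (f x)\<^sup>2 \<le> B\<^sup>2"
        using assms(2)[of x] by (metis abs_ge_zero abs_le_square_iff abs_of_nonneg order_trans)
      then show "norm (indicat_real Om x * (f x)\<^sup>2) \<le> norm (indicat_real Om x * B\<^sup>2)"
        by (auto simp: indicator_def)
    qed
  qed
qed

lemma ip_comm: "ip f g = ip g f"
  unfolding ip_def by (simp add: mult.commute)

lemma ip_add:
  assumes "set_integrable lebesgue Om (\<lambda>x. f x * h x)" "set_integrable lebesgue Om (\<lambda>x. g x * h x)"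
  shows "ip (\<lambda>x. f x + g x) h = ip f h + ip g h"
  unfolding ip_def using set_integral_add(2)[OF assms] by (simp add: distrib_right)

lemma ip_diff:
  assumes "set_integrable lebesgue Om (\<lambda>x. f x * h x)" "set_integrable lebesgue Om (\<lambda>x. g x * h x)"
  shows "ip (\<lambda>x. f x - g x) h = ip f h - ip g h"
  unfolding ip_def using set_integral_diff(2)[OF assms] by (simp add: left_diff_distrib)

lemma ip_scale: "ip (\<lambda>x. c * f x) h = c * ip f h"
  unfolding ip_def by (simp add: mult.assoc)

lemma ip_L2_add:
  assumes "f \<in> L2" "g \<in> L2" "h \<in> L2"
  shows "ip (\<lambda>x. f x + g x) h = ip f h + ip g h"
  using ip_add L2_mult_int assms by blast

lemma ip_L2_diff:
  assumes "f \<in> L2" "g \<in> L2" "h \<in> L2"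
  shows "ip (\<lambda>x. f x - g x) h = ip f h - ip g h"
  using ip_diff L2_mult_int assms by blast

lemma OmX_sub: "OmX X \<subseteq> Om"
  unfolding OmX_def by auto

lemma open_OmX: "open (OmX X)"
proof (rule openI)
  fix m assume "m \<in> OmX X"
  then obtain e where e: "e > 0" "ball m e \<subseteq> Om" "\<forall>y\<in>ball m e. X y = X m"
    unfolding OmX_def by auto
  have "ball m e \<subseteq> OmX X"
  proof
    fix y assume y: "y \<in> ball m e"
    define e' where "e' = e - dist m y"
    have e'p: "e' > 0" using y by (simp add: e'_def)
    have sub: "ball y e' \<subseteq> ball m e"
    proof
      fix z assume "z \<in> ball y e'"
      then have "dist y z < e - dist m y" by (simp add: e'_def)
      moreover have "dist m z \<le> dist m y + dist y z" by (rule dist_triangle)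
      ultimately have "dist m z < e" by linarith
      then show "z \<in> ball m e" by simp
    qed
    have yO: "y \<in> Om" using y e(2) by blast
    have "ball y e' \<subseteq> Om" using sub e(2) by blast
    moreover have "\<forall>z\<in>ball y e'. X z = X y"
    proof
      fix z assume "z \<in> ball y e'"
      then have "z \<in> ball m e" using sub by blast
      then have "X z = X m" using e(3) by blast
      moreover have "X y = X m" using y e(3) by blast
      ultimately show "X z = X y" by simp
    qed
    ultimately show "y \<in> OmX X"
      unfolding OmX_def using yO e'p by blast
  qed
  then show "\<exists>e>0. ball m e \<subseteq> OmX X" using e by auto
qed

lemma OmX_01: "x \<in> OmX X \<Longrightarrow> 0 < x \<and> x < 1"
proof -
  assume "x \<in> OmX X"
  then have "x \<in> Om" using OmX_sub[of X] by blast
  then show ?thesis unfolding Om_def by auto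
qed

lemma max_int_01:
  assumes "max_int X a b" shows "0 \<le> a" "b \<le> 1" "a < b" "{a<..<b} \<subseteq> Om"
proof -
  have "{a<..<b} \<subseteq> {0<..<1}" using assms OmX_sub unfolding max_int_def Om_def by blast
  moreover have "a < b" using assms unfolding max_int_def by auto
  ultimately show "0 \<le> a" "b \<le> 1" "a < b" "{a<..<b} \<subseteq> Om"
    using greaterThanLessThan_subseteq_greaterThanLessThan[of a b 0 1] unfolding Om_def by auto
qed

lemma max_int_unique:
  assumes "max_int X a b" "max_int X a' b'" "x \<in> {a<..<b}" "x \<in> {a'<..<b'}"
  shows "a = a' \<and> b = b'"
proof -
  have A: "a \<notin> OmX X" "b \<notin> OmX X" "a' \<notin> OmX X" "b' \<notin> OmX X"
    and S: "{a<..<b} \<subseteq> OmX X" "{a'<..<b'} \<subseteq> OmX X"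
    using assms unfolding max_int_def by auto
  have "\<not> a < a'"
  proof
    assume "a < a'" then have "a' \<in> {a<..<b}" using assms(3,4) by auto
    then show False using A S by blast
  qed
  moreover have "\<not> a' < a"
  proof
    assume "a' < a" then have "a \<in> {a'<..<b'}" using assms(3,4) by auto
    then show False using A S by blast
  qed
  moreover have "\<not> b < b'"
  proof
    assume "b < b'" then have "b \<in> {a'<..<b'}" using assms(3,4) by auto
    then show False using A S by blast
  qed
  moreover have "\<not> b' < b"
  proof
    assume "b' < b" then have "b' \<in> {a<..<b}" using assms(3,4) by auto
    then show False using A S by blast
  qed
  ultimately show ?thesis by auto
qed

lemma max_int_exists:
  assumes "m \<in> OmX X"
  shows "\<exists>a b. max_int X a b \<and> m \<in> {a<..<b}"
proof -
  define A where "A = {y. y \<le> m \<and> {y..m} \<subseteq> OmX X}"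
  define B where "B = {y. m \<le> y \<and> {m..y} \<subseteq> OmX X}"
  have mA: "m \<in> A" and mB: "m \<in> B" using assms by (auto simp: A_def B_def)
  have Alow: "0 \<le> y" if "y \<in> A" for y
  proof -
    have "y \<in> OmX X" using that unfolding A_def by auto
    then show ?thesis using OmX_01 by fastforce
  qed
  have Bup: "y \<le> 1" if "y \<in> B" for y
  proof -
    have "y \<in> OmX X" using that unfolding B_def by auto
    then show ?thesis using OmX_01 by fastforce
  qed
  define a where "a = Inf A"
  define b where "b = Sup B"
  have bddA: "bdd_below A" using Alow by (meson bdd_below.I)
  have bddB: "bdd_above B" using Bup by (meson bdd_above.I)
  have am: "a \<le> m" unfolding a_def using mA bddA by (simp add: cInf_lower)
  have mb: "m \<le> b" unfolding b_def using mB bddB by (simp add: cSup_upper)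
  have lowA: "a \<le> y" if "y \<in> A" for y unfolding a_def using that bddA by (simp add: cInf_lower)
  have upB: "y \<le> b" if "y \<in> B" for y unfolding b_def using that bddB by (simp add: cSup_upper)
  have amx: "{a<..m} \<subseteq> OmX X"
  proof
    fix y assume y: "y \<in> {a<..m}"
    then have "Inf A < y" by (simp add: a_def)
    then obtain y' where "y' \<in> A" "y' < y" using mA by (metis cInf_lessD empty_iff)
    then show "y \<in> OmX X" using y unfolding A_def by auto
  qed
  have mbx: "{m..<b} \<subseteq> OmX X"
  proof
    fix y assume y: "y \<in> {m..<b}"
    then have "y < Sup B" by (simp add: b_def)
    then obtain y' where "y' \<in> B" "y < y'" using mB by (metis less_cSupD empty_iff)
    then show "y \<in> OmX X" using y unfolding B_def by auto
  qed
  have anot: "a \<notin> OmX X"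
  proof
    assume "a \<in> OmX X"
    then obtain e where e: "e > 0" "ball a e \<subseteq> OmX X"
      using open_OmX openE by blast
    have "{a - e/2..m} \<subseteq> OmX X"
    proof
      fix y assume y: "y \<in> {a - e/2..m}"
      show "y \<in> OmX X"
      proof (cases "y \<le> a")
        case True
        then have "y \<in> ball a e" using y e by (auto simp: dist_real_def)
        then show ?thesis using e by auto
      next
        case False then show ?thesis using y amx by auto
      qed
    qed
    then have "a - e/2 \<in> A" unfolding A_def using am e by auto
    then show False using lowA e by fastforce
  qed
  have bnot: "b \<notin> OmX X"
  proof
    assume "b \<in> OmX X"
    then obtain e where e: "e > 0" "ball b e \<subseteq> OmX X"
      using open_OmX openE by blast
    have "{m..b + e/2} \<subseteq> OmX X"
    proof
      fix y assume y: "y \<in> {m..b + e/2}"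
      show "y \<in> OmX X"
      proof (cases "b \<le> y")
        case True
        then have "y \<in> ball b e" using y e by (auto simp: dist_real_def)
        then show ?thesis using e by auto
      next
        case False then show ?thesis using y mbx by auto
      qed
    qed
    then have "b + e/2 \<in> B" unfolding B_def using mb e by auto
    then show False using upB e by fastforce
  qed
  have "a < m" using am anot assms by (cases "a = m") auto
  moreover have "m < b" using mb bnot assms by (cases "b = m") auto
  moreover have "{a<..<b} \<subseteq> OmX X"
  proof
    fix x assume x: "x \<in> {a<..<b}"
    show "x \<in> OmX X"
    proof (cases "x \<le> m")
      case True then have "x \<in> {a<..m}" using x by auto
      then show ?thesis using amx by blast
    next
      case False then have "x \<in> {m..<b}" using x by auto
      then show ?thesis using mbx by blast
    qed
  qed
  ultimately have "max_int X a b \<and> m \<in> {a<..<b}" unfolding max_int_def using anot bnot by auto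
  then show ?thesis by blast
qed

lemma projH_in:
  assumes "max_int X a b" "m \<in> {a<..<b}"
  shows "projH X U m = (LINT w:{a<..<b}|lebesgue. U w) / (b - a)"
proof -
  have ex: "\<exists>a b. max_int X a b \<and> m \<in> {a<..<b}" using assms by auto
  define p where "p = (SOME (a, b). max_int X a b \<and> m \<in> {a<..<b})"
  have "(\<lambda>(a, b). max_int X a b \<and> m \<in> {a<..<b}) p"
    unfolding p_def by (rule someI_ex) (use ex in auto)
  then have "max_int X (fst p) (snd p)" "m \<in> {fst p<..<snd p}" by (auto simp: case_prod_beta)
  then have "fst p = a" "snd p = b" using max_int_unique assms by blast+
  then have "p = (a, b)" by (simp add: prod_eq_iff)
  then show ?thesis unfolding projH_def using ex p_def by simp
qed

lemma projH_out:
  assumes "m \<notin> OmX X"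
  shows "projH X U m = U m"
proof -
  have "\<not> (\<exists>a b. max_int X a b \<and> m \<in> {a<..<b})"
  proof
    assume "\<exists>a b. max_int X a b \<and> m \<in> {a<..<b}"
    then obtain a b where "max_int X a b" "m \<in> {a<..<b}" by blast
    then have "m \<in> OmX X" unfolding max_int_def by blast
    with assms show False by blast
  qed
  then show ?thesis unfolding projH_def by (rule if_not_P)
qed

lemma X_deriv0:
  assumes "m \<in> OmX X"
  shows "(X has_real_derivative 0) (at m)"
proof -
  obtain e where e: "e > 0" "\<forall>y\<in>ball m e. X y = X m" using assms unfolding OmX_def by auto
  have "((\<lambda>_. X m) has_real_derivative 0) (at m)" by simp
  moreover have "open (ball m e)" by simp
  moreover have "m \<in> ball m e" using e by simp
  moreover have "\<And>x. x \<in> ball m e \<Longrightarrow> X m = X x" using e by metis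
  ultimately show ?thesis
    by (rule has_field_derivative_transform_within_open)
qed

lemma X_const_int:
  assumes "max_int X a b" "x \<in> {a<..<b}" "y \<in> {a<..<b}"
  shows "X x = X y"
proof -
  have S: "{a<..<b} \<subseteq> OmX X" using assms unfolding max_int_def by auto
  have *: "X v = X u" if "u \<le> v" "u \<in> {a<..<b}" "v \<in> {a<..<b}" for u v
  proof -
    have "\<forall>z. u \<le> z \<and> z \<le> v \<longrightarrow> isCont X z"
    proof (intro allI impI)
      fix z assume "u \<le> z \<and> z \<le> v"
      then have "z \<in> OmX X" using that S by auto
      then show "isCont X z" using X_deriv0 DERIV_isCont by blast
    qed
    moreover have "\<forall>z. u < z \<and> z < v \<longrightarrow> (X has_real_derivative 0) (at z)"
    proof (intro allI impI)
      fix z assume "u < z \<and> z < v"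
      then have "z \<in> OmX X" using that S by auto
      then show "(X has_real_derivative 0) (at z)" using X_deriv0 by blast
    qed
    ultimately have "continuous_on {u..v} X" "\<forall>z. u < z \<and> z < v \<longrightarrow> (X has_real_derivative 0) (at z)"
      using continuous_at_imp_continuous_on[of "{u..v}" X] by auto
    show ?thesis
    proof (cases "u = v")
      case False
      then have "u < v" using that by simp
      show ?thesis
      proof (rule DERIV_isconst2[of u v X v])
        show "continuous_on {u..v} X" by fact
        show "\<And>x. \<lbrakk>u < x; x < v\<rbrakk> \<Longrightarrow> (X has_real_derivative 0) (at x)"
          using \<open>\<forall>z. u < z \<and> z < v \<longrightarrow> (X has_real_derivative 0) (at z)\<close> by blast
      qed (use \<open>u < v\<close> in auto)
    qed simp
  qed
  show ?thesis using *[of x y] *[of y x] assms by (cases "x \<le> y") auto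
qed

lemma OmX_sets[measurable]: "OmX X \<in> sets lebesgue"
proof -
  have "OmX X \<in> sets lborel" using borel_open[OF open_OmX] by simp
  then show ?thesis by (rule sets_completionI_sets)
qed

lemma Ioo_sets: "{a<..<b::real} \<in> sets lebesgue" by simp

definition Iset :: "(real \<Rightarrow> real) \<Rightarrow> (real \<times> real) set" where
  "Iset X = {(a, b). max_int X a b}"

lemma Iset_countable: "countable (Iset X)"
proof -
  define f where "f p = (SOME q. q \<in> \<rat> \<and> fst p < q \<and> q < snd p)" for p :: "real \<times> real"
  have fp: "f p \<in> \<rat> \<and> fst p < f p \<and> f p < snd p" if "p \<in> Iset X" for p
  proof -
    have "fst p < snd p" using that max_int_01(3) unfolding Iset_def by (auto simp: case_prod_beta)
    then have "\<exists>q. q \<in> \<rat> \<and> fst p < q \<and> q < snd p" using Rats_dense_in_real by blast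
    then show ?thesis unfolding f_def by (rule someI_ex)
  qed
  have "inj_on f (Iset X)"
  proof (rule inj_onI)
    fix p p' assume p: "p \<in> Iset X" and p': "p' \<in> Iset X" and eq: "f p = f p'"
    have m1: "max_int X (fst p) (snd p)" using p unfolding Iset_def by (auto simp: case_prod_beta)
    have m2: "max_int X (fst p') (snd p')" using p' unfolding Iset_def by (auto simp: case_prod_beta)
    have "f p \<in> {fst p<..<snd p}" using fp[OF p] by auto
    moreover have "f p \<in> {fst p'<..<snd p'}" using fp[OF p'] eq by auto
    ultimately have "fst p = fst p' \<and> snd p = snd p'" using max_int_unique[OF m1 m2] by blast
    then show "p = p'" by (simp add: prod_eq_iff)
  qed
  moreover have "countable (f ` Iset X)"
  proof (rule countable_subset)
    show "f ` Iset X \<subseteq> \<rat>" using fp by blast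
    show "countable \<rat>" by (rule countable_rat)
  qed
  ultimately show ?thesis using countable_image_inj_on by blast
qed

definition Jn :: "(real \<Rightarrow> real) \<Rightarrow> nat \<Rightarrow> real set" where
  "Jn X n = (if Iset X = {} then {} else
     (if (\<exists>k<n. from_nat_into (Iset X) k = from_nat_into (Iset X) n) then {}
      else {fst (from_nat_into (Iset X) n)<..<snd (from_nat_into (Iset X) n)}))"

lemma Jn_cases: "Jn X n = {} \<or> (\<exists>a b. max_int X a b \<and> Jn X n = {a<..<b})"
proof (cases "Iset X = {} \<or> (\<exists>k<n. from_nat_into (Iset X) k = from_nat_into (Iset X) n)")
  case True then show ?thesis unfolding Jn_def by auto
next
  case False
  then have ne: "Iset X \<noteq> {}" by blast
  have "from_nat_into (Iset X) n \<in> Iset X" using from_nat_into[OF ne] .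
  then have "max_int X (fst (from_nat_into (Iset X) n)) (snd (from_nat_into (Iset X) n))"
    unfolding Iset_def by (auto simp: case_prod_beta)
  moreover have "Jn X n = {fst (from_nat_into (Iset X) n)<..<snd (from_nat_into (Iset X) n)}"
    using False unfolding Jn_def by auto
  ultimately show ?thesis by blast
qed

lemma Jn_sets[measurable]: "Jn X n \<in> sets lebesgue"
  using Jn_cases[of X n] by auto

lemma Jn_sub: "Jn X n \<subseteq> OmX X"
  using Jn_cases[of X n] unfolding max_int_def by auto

lemma Jn_disj: "disjoint_family (Jn X)"
proof -
  have *: "Jn X m \<inter> Jn X n = {}" if "m < n" for m n
  proof (rule ccontr)
    assume "Jn X m \<inter> Jn X n \<noteq> {}"
    then obtain x where x: "x \<in> Jn X m" "x \<in> Jn X n" by blast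
    then have ne: "Iset X \<noteq> {}" unfolding Jn_def by (auto split: if_splits)
    have nm: "\<not> (\<exists>k<m. from_nat_into (Iset X) k = from_nat_into (Iset X) m)"
      and nn: "\<not> (\<exists>k<n. from_nat_into (Iset X) k = from_nat_into (Iset X) n)"
      using x ne unfolding Jn_def by (auto split: if_splits)
    have neq: "from_nat_into (Iset X) m \<noteq> from_nat_into (Iset X) n" using nn that by blast
    define p where "p = from_nat_into (Iset X) m"
    define q where "q = from_nat_into (Iset X) n"
    have "p \<in> Iset X" "q \<in> Iset X" unfolding p_def q_def using from_nat_into[OF ne] by auto
    then have mp: "max_int X (fst p) (snd p)" and mq: "max_int X (fst q) (snd q)"
      unfolding Iset_def by (auto simp: case_prod_beta)
    have "x \<in> {fst p<..<snd p}" using x(1) ne nm unfolding Jn_def p_def by auto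
    moreover have "x \<in> {fst q<..<snd q}" using x(2) ne nn unfolding Jn_def q_def by auto
    ultimately have "fst p = fst q \<and> snd p = snd q" using max_int_unique[OF mp mq] by blast
    then have "p = q" by (simp add: prod_eq_iff)
    then show False using neq unfolding p_def q_def by simp
  qed
  show ?thesis unfolding disjoint_family_on_def
  proof (intro ballI impI)
    fix m n :: nat assume "m \<noteq> n"
    then show "Jn X m \<inter> Jn X n = {}" using *[of m n] *[of n m] by (cases "m < n") auto
  qed
qed

lemma Jn_Union: "(\<Union>n. Jn X n) = OmX X"
proof
  show "(\<Union>n. Jn X n) \<subseteq> OmX X" using Jn_sub by blast
  show "OmX X \<subseteq> (\<Union>n. Jn X n)"
  proof
    fix x assume "x \<in> OmX X"
    then obtain a b where ab: "max_int X a b" "x \<in> {a<..<b}" using max_int_exists by blast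
    then have abI: "(a, b) \<in> Iset X" unfolding Iset_def by simp
    then have ne: "Iset X \<noteq> {}" by blast
    obtain n where n: "from_nat_into (Iset X) n = (a, b)"
      using from_nat_into_surj[OF Iset_countable abI] by blast
    define n0 where "n0 = (LEAST n. from_nat_into (Iset X) n = (a, b))"
    have n0: "from_nat_into (Iset X) n0 = (a, b)" unfolding n0_def using n by (rule LeastI)
    have nex: "\<not> (\<exists>k<n0. from_nat_into (Iset X) k = from_nat_into (Iset X) n0)"
    proof
      assume "\<exists>k<n0. from_nat_into (Iset X) k = from_nat_into (Iset X) n0"
      then obtain k where "k < n0" "from_nat_into (Iset X) k = (a, b)" using n0 by auto
      then show False unfolding n0_def using not_less_Least by blast
    qed
    have "Jn X n0 = {fst (from_nat_into (Iset X) n0)<..<snd (from_nat_into (Iset X) n0)}"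
      unfolding Jn_def using ne nex by (simp only: if_False if_not_P)
    then have "Jn X n0 = {a<..<b}" using n0 by simp
    then show "x \<in> (\<Union>n. Jn X n)" using ab by blast
  qed
qed

lemma Jn_int_sum:
  fixes f :: "real \<Rightarrow> real"
  assumes "set_integrable lebesgue (OmX X) f"
  shows "(\<lambda>n. \<Sum>k<n. (LINT x:Jn X k|lebesgue. f x)) \<longlonglongrightarrow> (LINT x:OmX X|lebesgue. f x)"
proof -
  define A where "A n = (\<Union>k<n. Jn X k)" for n
  have A_sets: "A n \<in> sets lebesgue" for n unfolding A_def by measurable
  have inc: "incseq A" unfolding incseq_def
  proof (intro allI impI)
    fix m n :: nat assume "m \<le> n"
    then show "A m \<subseteq> A n" unfolding A_def by (intro UN_mono) auto
  qed
  have UA: "(\<Union>n. A n) = OmX X" unfolding A_def using Jn_Union[of X] by auto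
  have int_J: "set_integrable lebesgue (Jn X k) f" for k
    by (rule set_integrable_subset[OF assms]) (auto simp: Jn_sub)
  have "(\<lambda>n. LINT x:A n|lebesgue. f x) \<longlonglongrightarrow> (LINT x:(\<Union>n. A n)|lebesgue. f x)"
    using set_integral_cont_up[OF A_sets inc] assms UA by simp
  moreover have "(LINT x:A n|lebesgue. f x) = (\<Sum>k<n. (LINT x:Jn X k|lebesgue. f x))" for n
    unfolding A_def
  proof (rule set_integral_finite_Union)
    show "disjoint_family_on (Jn X) {..<n}" using Jn_disj[of X] disjoint_family_on_mono by blast
  qed (auto simp: int_J)
  ultimately show ?thesis using UA by simp
qed

lemma Jn_int_cases:
  fixes f :: "real \<Rightarrow> real"
  obtains "(LINT x:Jn X k|lebesgue. f x) = 0"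
  | a b where "max_int X a b" "(LINT x:Jn X k|lebesgue. f x) = (LINT x:{a<..<b}|lebesgue. f x)"
proof (cases "Jn X k = {}")
  case True
  then have "(LINT x:Jn X k|lebesgue. f x) = 0" by (simp add: set_lebesgue_integral_def)
  then show ?thesis using that(1) by blast
next
  case False
  then obtain a b where "max_int X a b" "Jn X k = {a<..<b}" using Jn_cases[of X k] by blast
  then show ?thesis using that(2) by simp
qed

lemma decomp_le:
  fixes f :: "real \<Rightarrow> real"
  assumes "set_integrable lebesgue (OmX X) f"
    and "\<And>a b. max_int X a b \<Longrightarrow> (LINT x:{a<..<b}|lebesgue. f x) \<le> 0"
  shows "(LINT x:OmX X|lebesgue. f x) \<le> 0"
proof -
  have L: "(\<lambda>n. \<Sum>k<n. (LINT x:Jn X k|lebesgue. f x)) \<longlonglongrightarrow> (LINT x:OmX X|lebesgue. f x)"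
    by (rule Jn_int_sum[OF assms(1)])
  have t: "(LINT x:Jn X k|lebesgue. f x) \<le> 0" for k
    by (rule Jn_int_cases[of X k f]) (use assms(2) in auto)
  have "\<forall>n\<ge>0. (\<Sum>k<n. (LINT x:Jn X k|lebesgue. f x)) \<le> 0"
    using t by (simp add: sum_nonpos)
  then show ?thesis using LIMSEQ_le_const2[OF L] by blast
qed

lemma decomp_eq:
  fixes f :: "real \<Rightarrow> real"
  assumes "set_integrable lebesgue (OmX X) f"
    and "\<And>a b. max_int X a b \<Longrightarrow> (LINT x:{a<..<b}|lebesgue. f x) = 0"
  shows "(LINT x:OmX X|lebesgue. f x) = 0"
proof -
  have L: "(\<lambda>n. \<Sum>k<n. (LINT x:Jn X k|lebesgue. f x)) \<longlonglongrightarrow> (LINT x:OmX X|lebesgue. f x)"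
    by (rule Jn_int_sum[OF assms(1)])
  have "(LINT x:Jn X k|lebesgue. f x) = 0" for k
    by (rule Jn_int_cases[of X k f]) (use assms(2) in auto)
  then have "(\<lambda>n. \<Sum>k<n. (LINT x:Jn X k|lebesgue. f x)) = (\<lambda>n. 0)" by simp
  then show ?thesis using L LIMSEQ_unique[OF _ tendsto_const] by metis
qed

lemma decomp_nn:
  assumes [measurable]: "g \<in> borel_measurable lebesgue"
  shows "(\<integral>\<^sup>+x\<in>OmX X. g x \<partial>lebesgue) = (\<Sum>n. (\<integral>\<^sup>+x\<in>Jn X n. g x \<partial>lebesgue))"
  using nn_integral_disjoint_family[OF assms Jn_sets Jn_disj, of X] Jn_Union[of X] by simp

lemma borel_to_leb: "(f::real \<Rightarrow> real) \<in> borel_measurable borel \<Longrightarrow> f \<in> borel_measurable lebesgue"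
  by (rule measurable_completion) simp

lemma Ioo_fin: "emeasure lebesgue {a<..<b::real} \<noteq> \<infinity>"
proof -
  have "{a<..<b} \<in> lmeasurable" by simp
  then show ?thesis by (simp add: fmeasurable_def)
qed

lemma set_int_const_Ioo:
  "a \<le> b \<Longrightarrow> (LINT x:{a<..<b::real}|lebesgue. c) = (b - a) * c"
  using set_integral_const[OF _ Ioo_fin, of a b c] by simp

lemma L2_sub_int:
  assumes "f \<in> L2" "A \<in> sets lebesgue" "A \<subseteq> Om"
  shows "set_integrable lebesgue A f"
  using set_integrable_subset[OF L2_int[OF assms(1)] assms(2,3)] .

lemma max_int_int_W:
  assumes "U \<in> L2" "max_int X a b"
  shows "(LINT x:{a<..<b}|lebesgue. U x - projH X U x) = 0"
proof -
  have ab: "a < b" "{a<..<b} \<subseteq> Om" using max_int_01[OF assms(2)] by auto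
  define c where "c = (LINT w:{a<..<b}|lebesgue. U w) / (b - a)"
  have P: "projH X U x = c" if "x \<in> {a<..<b}" for x
    using projH_in[OF assms(2) that] unfolding c_def by simp
  have iU: "set_integrable lebesgue {a<..<b} U" using L2_sub_int[OF assms(1) _ ab(2)] by simp
  have "(LINT x:{a<..<b}|lebesgue. U x - projH X U x) = (LINT x:{a<..<b}|lebesgue. U x - c)"
    by (rule set_lebesgue_integral_cong) (auto simp: P)
  also have "\<dots> = (LINT x:{a<..<b}|lebesgue. U x) - (LINT x:{a<..<b}|lebesgue. c)"
  proof (rule set_integral_diff(2)[OF iU])
    have "integrable lebesgue (\<lambda>x. c * indicat_real {a<..<b} x)"
      using lmeasurable_iff_integrable[of "{a<..<b}"] by simp
    then show "set_integrable lebesgue {a<..<b} (\<lambda>x. c)"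
      unfolding set_integrable_def by (simp add: mult.commute)
  qed
  also have "\<dots> = 0" using set_int_const_Ioo[of a b c] ab unfolding c_def by simp
  finally show ?thesis .
qed

lemma projH_cont: "continuous_on (OmX X) (projH X U)"
proof (rule continuous_at_imp_continuous_on, intro ballI)
  fix x assume "x \<in> OmX X"
  then obtain a b where ab: "max_int X a b" "x \<in> {a<..<b}" using max_int_exists by blast
  define c where "c = (LINT w:{a<..<b}|lebesgue. U w) / (b - a)"
  have P: "\<And>y. y \<in> {a<..<b} \<Longrightarrow> projH X U y = c"
    using projH_in[OF ab(1)] unfolding c_def by simp
  have "((\<lambda>_. c) has_real_derivative 0) (at x)" by simp
  moreover have "open {a<..<b}" by simp
  moreover note ab(2)
  moreover have "\<And>y. y \<in> {a<..<b} \<Longrightarrow> c = projH X U y" using P by metis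
  ultimately have "(projH X U has_real_derivative 0) (at x)"
    by (rule has_field_derivative_transform_within_open)
  then show "isCont (projH X U) x" by (rule DERIV_isCont)
qed

lemma projH_meas:
  assumes "U \<in> L2"
  shows "(\<lambda>x. indicat_real Om x * projH X U x) \<in> borel_measurable lebesgue"
proof -
  have m1: "(\<lambda>x. indicat_real (OmX X) x *\<^sub>R projH X U x) \<in> borel_measurable lebesgue"
    by (rule borel_to_leb, rule borel_measurable_continuous_on_indicator)
       (simp_all add: borel_open open_OmX projH_cont)
  have m2: "(\<lambda>x. (1 - indicat_real (OmX X) x) * (indicat_real Om x * U x)) \<in> borel_measurable lebesgue"
    using L2_D(1)[OF assms] by simp
  have "(\<lambda>x. indicat_real Om x * projH X U x) =
     (\<lambda>x. indicat_real (OmX X) x *\<^sub>R projH X U x + (1 - indicat_real (OmX X) x) * (indicat_real Om x * U x))"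
  proof
    fix x
    show "indicat_real Om x * projH X U x =
      indicat_real (OmX X) x *\<^sub>R projH X U x + (1 - indicat_real (OmX X) x) * (indicat_real Om x * U x)"
    proof (cases "x \<in> OmX X")
      case True then have "x \<in> Om" using OmX_sub by blast
      with True show ?thesis by simp
    next
      case False then show ?thesis by (simp add: projH_out)
    qed
  qed
  then show ?thesis using m1 m2 by simp
qed

lemma L2_sq_sub_int:
  assumes "f \<in> L2" "A \<in> sets lebesgue" "A \<subseteq> Om"
  shows "set_integrable lebesgue A (\<lambda>x. (f x)\<^sup>2)"
proof -
  have "set_integrable lebesgue Om (\<lambda>x. (f x)\<^sup>2)" using assms(1) unfolding L2_def by simp
  then show ?thesis using set_integrable_subset assms(2,3) by blast
qed

lemma const_Ioo_int: fixes c :: real shows "set_integrable lebesgue {a<..<b::real} (\<lambda>x. c)"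
proof -
  have "integrable lebesgue (\<lambda>x. c * indicat_real {a<..<b} x)"
    using lmeasurable_iff_integrable[of "{a<..<b}"] by simp
  then show ?thesis unfolding set_integrable_def by (simp add: mult.commute)
qed

lemma jensen_Ioo:
  assumes "U \<in> L2" "a < b" "{a<..<b} \<subseteq> Om"
  shows "(b - a) * ((LINT w:{a<..<b}|lebesgue. U w) / (b - a))\<^sup>2 \<le> (LINT w:{a<..<b}|lebesgue. (U w)\<^sup>2)"
proof -
  define I where "I = {a<..<b}"
  define c where "c = (LINT w:I|lebesgue. U w) / (b - a)"
  have iU: "set_integrable lebesgue I U" unfolding I_def using L2_sub_int[OF assms(1) _ assms(3)] by simp
  have iU2: "set_integrable lebesgue I (\<lambda>x. (U x)\<^sup>2)" unfolding I_def using L2_sq_sub_int[OF assms(1) _ assms(3)] by simp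
  have ic: "set_integrable lebesgue I (\<lambda>x. d)" for d :: real unfolding I_def by (rule const_Ioo_int)
  have icU: "set_integrable lebesgue I (\<lambda>x. (2 * c) * U x)"
  proof -
    have "integrable lebesgue (\<lambda>x. (2 * c) * (indicat_real I x * U x))"
      using iU unfolding set_integrable_def by (intro integrable_mult_right) simp
    then show ?thesis unfolding set_integrable_def by (simp add: mult_ac)
  qed
  have sU: "(LINT w:I|lebesgue. U w) = c * (b - a)" unfolding c_def using assms(2) by simp
  have cI: "(LINT w:I|lebesgue. d) = (b - a) * d" for d :: real unfolding I_def using set_int_const_Ioo[of a b d] assms(2) by simp
  have "0 \<le> (LINT w:I|lebesgue. (U w - c)\<^sup>2)"
    unfolding set_lebesgue_integral_def by (intro Bochner_Integration.integral_nonneg) (simp add: indicator_def)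
  also have "(LINT w:I|lebesgue. (U w - c)\<^sup>2) = (LINT w:I|lebesgue. ((U w)\<^sup>2 - (2 * c) * U w) + c\<^sup>2)"
    by (rule set_lebesgue_integral_cong) (auto simp: I_def power2_eq_square algebra_simps)
  also have "\<dots> = (LINT w:I|lebesgue. (U w)\<^sup>2 - (2 * c) * U w) + (LINT w:I|lebesgue. c\<^sup>2)"
    by (rule set_integral_add(2)) (use iU2 icU ic set_integral_diff(1) in auto)
  also have "(LINT w:I|lebesgue. (U w)\<^sup>2 - (2 * c) * U w) = (LINT w:I|lebesgue. (U w)\<^sup>2) - (LINT w:I|lebesgue. (2 * c) * U w)"
    by (rule set_integral_diff(2)[OF iU2 icU])
  also have "(LINT w:I|lebesgue. (2 * c) * U w) = (2 * c) * (c * (b - a))"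
    using set_integral_mult_right[where A=I and a="2 * c" and M=lebesgue and f=U] sU by simp
  finally have "0 \<le> (LINT w:I|lebesgue. (U w)\<^sup>2) - 2 * c * (c * (b - a)) + (b - a) * c\<^sup>2"
    using cI by simp
  then have "(b - a) * c\<^sup>2 \<le> (LINT w:I|lebesgue. (U w)\<^sup>2)"
    by (simp add: power2_eq_square algebra_simps)
  then show ?thesis unfolding c_def I_def .
qed

lemma nn_int_P_le:
  assumes "U \<in> L2" "max_int X a b"
  shows "(\<integral>\<^sup>+x\<in>{a<..<b}. ennreal (indicat_real Om x * (projH X U x)\<^sup>2) \<partial>lebesgue)
       \<le> (\<integral>\<^sup>+x\<in>{a<..<b}. ennreal (indicat_real Om x * (U x)\<^sup>2) \<partial>lebesgue)"
proof -
  have ab: "a < b" "{a<..<b} \<subseteq> Om" using max_int_01[OF assms(2)] by auto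
  define c where "c = (LINT w:{a<..<b}|lebesgue. U w) / (b - a)"
  have P: "projH X U x = c" if "x \<in> {a<..<b}" for x
    using projH_in[OF assms(2) that] unfolding c_def by simp
  have "(\<integral>\<^sup>+x\<in>{a<..<b}. ennreal (indicat_real Om x * (projH X U x)\<^sup>2) \<partial>lebesgue)
      = (\<integral>\<^sup>+x\<in>{a<..<b}. ennreal (c\<^sup>2) \<partial>lebesgue)"
  proof (rule nn_integral_cong)
    fix x show "ennreal (indicat_real Om x * (projH X U x)\<^sup>2) * indicator {a<..<b} x = ennreal (c\<^sup>2) * indicator {a<..<b} x"
      using P[of x] ab(2) by (cases "x \<in> {a<..<b}") auto
  qed
  also have "\<dots> = ennreal (c\<^sup>2) * emeasure lebesgue {a<..<b}"
    by (rule nn_integral_cmult_indicator) simp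
  also have "\<dots> = ennreal ((b - a) * c\<^sup>2)"
    using ab(1) by (simp add: ennreal_mult' mult.commute)
  also have "\<dots> \<le> ennreal (LINT w:{a<..<b}|lebesgue. (U w)\<^sup>2)"
    using jensen_Ioo[OF assms(1) ab] unfolding c_def by (simp add: ennreal_leI)
  also have "(LINT w:{a<..<b}|lebesgue. (U w)\<^sup>2) = integral\<^sup>L lebesgue (\<lambda>x. indicat_real {a<..<b} x * (U x)\<^sup>2)"
    by (simp add: set_lebesgue_integral_def)
  also have "ennreal \<dots> = (\<integral>\<^sup>+x. ennreal (indicat_real {a<..<b} x * (U x)\<^sup>2) \<partial>lebesgue)"
  proof (rule nn_integral_eq_integral[symmetric])
    show "integrable lebesgue (\<lambda>x. indicat_real {a<..<b} x * (U x)\<^sup>2)"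
      using L2_sq_sub_int[OF assms(1) _ ab(2)] unfolding set_integrable_def by simp
  qed auto
  also have "\<dots> = (\<integral>\<^sup>+x\<in>{a<..<b}. ennreal (indicat_real Om x * (U x)\<^sup>2) \<partial>lebesgue)"
  proof (rule nn_integral_cong)
    fix x show "ennreal (indicat_real {a<..<b} x * (U x)\<^sup>2) = ennreal (indicat_real Om x * (U x)\<^sup>2) * indicator {a<..<b} x"
      using ab(2) by (cases "x \<in> {a<..<b}") auto
  qed
  finally show ?thesis .
qed

lemma projH_L2:
  assumes "U \<in> L2"
  shows "projH X U \<in> L2"
proof (rule L2_I[OF projH_meas[OF assms]])
  define g where "g x = ennreal (indicat_real Om x * (projH X U x)\<^sup>2)" for x
  define gU where "gU x = ennreal (indicat_real Om x * (U x)\<^sup>2)" for x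
  have gm[measurable]: "g \<in> borel_measurable lebesgue"
  proof -
    have "(\<lambda>x. (indicat_real Om x * projH X U x)\<^sup>2) \<in> borel_measurable lebesgue"
      using projH_meas[OF assms] by simp
    then show ?thesis unfolding g_def by (simp add: ind_sq)
  qed
  have gUm[measurable]: "gU \<in> borel_measurable lebesgue"
  proof -
    have "(\<lambda>x. (indicat_real Om x * U x)\<^sup>2) \<in> borel_measurable lebesgue"
      using L2_D(1)[OF assms] by simp
    then show ?thesis unfolding gU_def by (simp add: ind_sq)
  qed
  have intU: "integrable lebesgue (\<lambda>x. indicat_real Om x * (U x)\<^sup>2)" using L2_D(2)[OF assms] .
  have "(\<integral>\<^sup>+x\<in>OmX X. g x \<partial>lebesgue) = (\<Sum>n. (\<integral>\<^sup>+x\<in>Jn X n. g x \<partial>lebesgue))"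
    by (rule decomp_nn[OF gm])
  also have "\<dots> \<le> (\<Sum>n. (\<integral>\<^sup>+x\<in>Jn X n. gU x \<partial>lebesgue))"
  proof (rule suminf_le)
    fix n
    show "(\<integral>\<^sup>+x\<in>Jn X n. g x \<partial>lebesgue) \<le> (\<integral>\<^sup>+x\<in>Jn X n. gU x \<partial>lebesgue)"
    proof (cases "Jn X n = {}")
      case True then show ?thesis by simp
    next
      case False
      then obtain a b where "max_int X a b" "Jn X n = {a<..<b}" using Jn_cases[of X n] by blast
      then show ?thesis unfolding g_def gU_def using nn_int_P_le[OF assms] by simp
    qed
  qed simp_all
  also have "\<dots> = (\<integral>\<^sup>+x\<in>OmX X. gU x \<partial>lebesgue)"
    by (rule decomp_nn[OF gUm, symmetric])
  finally have le1: "(\<integral>\<^sup>+x\<in>OmX X. g x \<partial>lebesgue) \<le> (\<integral>\<^sup>+x\<in>OmX X. gU x \<partial>lebesgue)" .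
  have eq2: "g x * indicator (- OmX X) x = gU x * indicator (- OmX X) x" for x
    unfolding g_def gU_def by (cases "x \<in> OmX X") (auto simp: projH_out)
  have split: "(\<integral>\<^sup>+x. h x \<partial>lebesgue) = (\<integral>\<^sup>+x\<in>OmX X. h x \<partial>lebesgue) + (\<integral>\<^sup>+x\<in>- OmX X. h x \<partial>lebesgue)"
    if [measurable]: "h \<in> borel_measurable lebesgue" for h :: "real \<Rightarrow> ennreal"
  proof -
    have "(\<integral>\<^sup>+x. h x \<partial>lebesgue) = (\<integral>\<^sup>+x. h x * indicator (OmX X) x + h x * indicator (- OmX X) x \<partial>lebesgue)"
      by (rule nn_integral_cong) (auto split: split_indicator)
    also have "\<dots> = (\<integral>\<^sup>+x\<in>OmX X. h x \<partial>lebesgue) + (\<integral>\<^sup>+x\<in>- OmX X. h x \<partial>lebesgue)"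
      by (rule nn_integral_add) auto
    finally show ?thesis .
  qed
  have "(\<integral>\<^sup>+x. g x \<partial>lebesgue) = (\<integral>\<^sup>+x\<in>OmX X. g x \<partial>lebesgue) + (\<integral>\<^sup>+x\<in>- OmX X. gU x \<partial>lebesgue)"
    using split[OF gm] eq2 by simp
  also have "\<dots> \<le> (\<integral>\<^sup>+x\<in>OmX X. gU x \<partial>lebesgue) + (\<integral>\<^sup>+x\<in>- OmX X. gU x \<partial>lebesgue)"
    using le1 by (rule add_right_mono)
  also have "\<dots> = (\<integral>\<^sup>+x. gU x \<partial>lebesgue)" using split[OF gUm] by simp
  also have "\<dots> = ennreal (integral\<^sup>L lebesgue (\<lambda>x. indicat_real Om x * (U x)\<^sup>2))"
    unfolding gU_def by (rule nn_integral_eq_integral[OF intU]) auto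
  also have "\<dots> < \<infinity>" by simp
  finally have fin: "(\<integral>\<^sup>+x. g x \<partial>lebesgue) < \<infinity>" .
  show "integrable lebesgue (\<lambda>x. indicat_real Om x * (projH X U x)\<^sup>2)"
  proof (rule integrableI_bounded)
    show "(\<lambda>x. indicat_real Om x * (projH X U x)\<^sup>2) \<in> borel_measurable lebesgue"
    proof -
      have "(\<lambda>x. (indicat_real Om x * projH X U x)\<^sup>2) \<in> borel_measurable lebesgue"
        using projH_meas[OF assms] by simp
      then show ?thesis by (simp add: ind_sq)
    qed
    have "(\<lambda>x. ennreal (norm (indicat_real Om x * (projH X U x)\<^sup>2))) = g"
      unfolding g_def by (auto simp: fun_eq_iff indicator_def)
    then show "(\<integral>\<^sup>+x. ennreal (norm (indicat_real Om x * (projH X U x)\<^sup>2)) \<partial>lebesgue) < \<infinity>"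
      using fin by simp
  qed
qed

lemma ind_L2:
  assumes "A \<in> sets lebesgue"
  shows "indicat_real A \<in> L2"
proof (rule L2_bounded[where B=1])
  show "(\<lambda>x. indicat_real Om x * indicat_real A x) \<in> borel_measurable lebesgue"
    using assms by simp
qed (auto simp: indicator_def)

lemma ip_ind:
  assumes "A \<in> sets lebesgue" "A \<subseteq> Om"
  shows "ip f (indicat_real A) = (LINT x:A|lebesgue. f x)"
proof -
  have "(\<lambda>x. indicat_real Om x *\<^sub>R (f x * indicat_real A x)) = (\<lambda>x. indicat_real A x *\<^sub>R f x)"
    using assms(2) by (auto simp: fun_eq_iff indicator_def)
  then show ?thesis unfolding ip_def set_lebesgue_integral_def by simp
qed

lemma W_L2: "U \<in> L2 \<Longrightarrow> (\<lambda>x. U x - projH X U x) \<in> L2"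
  using L2_diff projH_L2 by blast

lemma orth:
  assumes U: "U \<in> L2"
    and int: "set_integrable lebesgue Om (\<lambda>x. (U x - projH X U x) * h x)"
    and hc: "\<And>a b x y. max_int X a b \<Longrightarrow> x \<in> {a<..<b} \<Longrightarrow> y \<in> {a<..<b} \<Longrightarrow> h x = h y"
  shows "ip (\<lambda>x. U x - projH X U x) h = 0"
proof -
  define f where "f x = (U x - projH X U x) * h x" for x
  have iX: "set_integrable lebesgue (OmX X) f"
    unfolding f_def by (rule set_integrable_subset[OF int]) (auto simp: OmX_sub)
  have iC: "set_integrable lebesgue (Om - OmX X) f"
    unfolding f_def by (rule set_integrable_subset[OF int]) auto
  have OmU: "Om = OmX X \<union> (Om - OmX X)" using OmX_sub by blast
  have "ip (\<lambda>x. U x - projH X U x) h = (LINT x:Om|lebesgue. f x)" unfolding ip_def f_def by simp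
  also have "\<dots> = (LINT x:OmX X|lebesgue. f x) + (LINT x:Om - OmX X|lebesgue. f x)"
    by (subst OmU, rule set_integral_Un[OF _ iX iC]) auto
  also have "(LINT x:Om - OmX X|lebesgue. f x) = (LINT x:Om - OmX X|lebesgue. 0)"
    by (rule set_lebesgue_integral_cong) (auto simp: f_def projH_out)
  also have "(LINT x:OmX X|lebesgue. f x) = 0"
  proof (rule decomp_eq[OF iX])
    fix a b assume ab: "max_int X a b"
    have ab2: "a < b" "{a<..<b} \<subseteq> Om" using max_int_01[OF ab] by auto
    define m0 where "m0 = (a + b) / 2"
    have m0: "m0 \<in> {a<..<b}" unfolding m0_def using ab2 by auto
    have "(LINT x:{a<..<b}|lebesgue. f x) = (LINT x:{a<..<b}|lebesgue. h m0 * (U x - projH X U x))"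
      by (rule set_lebesgue_integral_cong) (auto simp: f_def hc[OF ab _ m0])
    also have "\<dots> = h m0 * (LINT x:{a<..<b}|lebesgue. U x - projH X U x)"
      by (rule set_integral_mult_right)
    also have "\<dots> = 0" using max_int_int_W[OF U ab] by simp
    finally show "(LINT x:{a<..<b}|lebesgue. f x) = 0" .
  qed
  finally show ?thesis by simp
qed

lemma ind_const_on_max:
  assumes "t \<notin> OmX X" "max_int X a b" "x \<in> {a<..<b}" "y \<in> {a<..<b}"
  shows "indicat_real {t<..} x = indicat_real {t<..} y"
proof -
  have "t \<notin> {a<..<b}" using assms(1,2) unfolding max_int_def by blast
  then have "t \<le> a \<or> b \<le> t" by auto
  then show ?thesis using assms(3,4) by (auto simp: indicator_def)
qed

lemma cond_iff:
  assumes U: "U \<in> L2" and ab: "max_int X a b" and m: "m \<in> {a<..<b}"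
  shows "projH X U m \<le> (LINT w:{a<..m}|lebesgue. U w) / (m - a)
     \<longleftrightarrow> 0 \<le> (LINT w:{a<..m}|lebesgue. U w - projH X U w)"
proof -
  have ab2: "a < b" "{a<..<b} \<subseteq> Om" using max_int_01[OF ab] by auto
  define c where "c = (LINT w:{a<..<b}|lebesgue. U w) / (b - a)"
  have sub: "{a<..m} \<subseteq> {a<..<b}" using m by auto
  have P: "projH X U x = c" if "x \<in> {a<..<b}" for x
    using projH_in[OF ab that] unfolding c_def by simp
  have iU: "set_integrable lebesgue {a<..m} U" using L2_sub_int[OF U _] sub ab2 by auto
  have ic: "set_integrable lebesgue {a<..m} (\<lambda>x. c)"
  proof -
    have "{a<..m} \<in> lmeasurable" by (intro bounded_set_imp_lmeasurable) auto
    then have "integrable lebesgue (\<lambda>x. c * indicat_real {a<..m} x)"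
      using lmeasurable_iff_integrable[of "{a<..m}"] by simp
    then show ?thesis unfolding set_integrable_def by (simp add: mult.commute)
  qed
  have "(LINT w:{a<..m}|lebesgue. U w - projH X U w) = (LINT w:{a<..m}|lebesgue. U w - c)"
    by (rule set_lebesgue_integral_cong) (use P sub in auto)
  also have "\<dots> = (LINT w:{a<..m}|lebesgue. U w) - (LINT w:{a<..m}|lebesgue. c)"
    by (rule set_integral_diff(2)[OF iU ic])
  also have "(LINT w:{a<..m}|lebesgue. c) = (m - a) * c"
    using set_integral_const[of "{a<..m}" lebesgue c] m by simp
  finally have eq: "(LINT w:{a<..m}|lebesgue. U w - projH X U w) = (LINT w:{a<..m}|lebesgue. U w) - (m - a) * c" .
  have ma: "m - a > 0" using m by auto
  have "projH X U m = c" using P m by blast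
  then show ?thesis using eq ma by (simp add: pos_le_divide_eq mult.commute)
qed

lemma ip_W_ind:
  assumes U: "U \<in> L2" and ab: "max_int X a b" and m: "m \<in> {a<..<b}"
  shows "ip (\<lambda>x. U x - projH X U x) (indicat_real {m<..}) = - (LINT w:{a<..m}|lebesgue. U w - projH X U w)"
proof -
  define W where "W x = U x - projH X U x" for x
  have WL: "W \<in> L2" unfolding W_def using W_L2[OF U] .
  have anot: "a \<notin> OmX X" using ab unfolding max_int_def by auto
  have ab2: "0 \<le> a" "{a<..<b} \<subseteq> Om" using max_int_01[OF ab] by auto
  have sub: "{a<..m} \<subseteq> Om" using m ab2 by auto
  have eqf: "indicat_real {m<..} = (\<lambda>x. indicat_real {a<..} x - indicat_real {a<..m} x)"
    using m by (auto simp: fun_eq_iff indicator_def)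
  have "ip W (indicat_real {m<..}) = ip (indicat_real {m<..}) W" by (rule ip_comm)
  also have "\<dots> = ip (indicat_real {a<..}) W - ip (indicat_real {a<..m}) W"
    unfolding eqf by (rule ip_L2_diff) (auto intro: ind_L2 WL)
  also have "ip (indicat_real {a<..}) W = 0"
  proof -
    have "ip W (indicat_real {a<..}) = 0" unfolding W_def
    proof (rule orth[OF U])
      show "set_integrable lebesgue Om (\<lambda>x. (U x - projH X U x) * indicat_real {a<..} x)"
        using L2_mult_int[OF W_L2[OF U] ind_L2[of "{a<..}"]] by simp
    qed (rule ind_const_on_max[OF anot])
    then show ?thesis by (simp add: ip_comm)
  qed
  also have "ip (indicat_real {a<..m}) W = (LINT w:{a<..m}|lebesgue. W w)"
    using ip_ind[of "{a<..m}" W] sub by (simp add: ip_comm)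
  finally show ?thesis unfolding W_def by simp
qed

lemma Y_Kcone:
  assumes "X \<in> Kcone"
  shows "(\<lambda>x. X x + indicat_real {m<..} x) \<in> Kcone"
proof -
  have XL: "X \<in> L2" and mX: "mono_on Om X" using assms unfolding Kcone_def by auto
  have "(\<lambda>x. X x + indicat_real {m<..} x) \<in> L2" using L2_add[OF XL ind_L2[of "{m<..}"]] by simp
  moreover have "mono_on Om (\<lambda>x. X x + indicat_real {m<..} x)"
  proof (rule mono_onI)
    fix x y assume "x \<in> Om" "y \<in> Om" "x \<le> y"
    then have "X x \<le> X y" using mX by (simp add: mono_on_def)
    moreover have "indicat_real {m<..} x \<le> indicat_real {m<..} y" using \<open>x \<le> y\<close> by (auto simp: indicator_def)
    ultimately show "X x + indicat_real {m<..} x \<le> X y + indicat_real {m<..} y" by simp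
  qed
  ultimately show ?thesis unfolding Kcone_def by simp
qed

lemma D_in_T:
  assumes "X \<in> Kcone"
  shows "indicat_real {m<..} \<in> tangent_cone X"
proof -
  have "ip (indicat_real {m<..}) W' \<le> 0" if "W' \<in> normal_cone X" for W'
  proof -
    have "\<forall>Y\<in>Kcone. ip W' (\<lambda>x. Y x - X x) \<le> 0" using that unfolding normal_cone_def by blast
    from bspec[OF this Y_Kcone[OF assms, of m]]
    show ?thesis by (simp add: ip_comm)
  qed
  then show ?thesis unfolding tangent_cone_def using ind_L2[of "{m<..}"] by simp
qed

lemma fwd_N:
  assumes X: "X \<in> Kcone" and U: "U \<in> L2"
    and N: "(\<lambda>x. U x - projH X U x) \<in> normal_cone X"
    and ab: "max_int X a b" and m: "m \<in> {a<..<b}"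
  shows "projH X U m \<le> (LINT w:{a<..m}|lebesgue. U w) / (m - a)"
proof -
  have "\<forall>Y\<in>Kcone. ip (\<lambda>x. U x - projH X U x) (\<lambda>x. Y x - X x) \<le> 0" using N unfolding normal_cone_def by blast
  from bspec[OF this Y_Kcone[OF X, of m]]
  have "ip (\<lambda>x. U x - projH X U x) (indicat_real {m<..}) \<le> 0" by simp
  then have "0 \<le> (LINT w:{a<..m}|lebesgue. U w - projH X U w)" using ip_W_ind[OF U ab m] by simp
  then show ?thesis using cond_iff[OF U ab m] by simp
qed

lemma fwd_proj:
  assumes X: "X \<in> Kcone" and U: "U \<in> L2"
    and PR: "is_proj (tangent_cone X) U (projH X U)"
    and ab: "max_int X a b" and m: "m \<in> {a<..<b}"
  shows "projH X U m \<le> (LINT w:{a<..m}|lebesgue. U w) / (m - a)"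
proof -
  define P where "P = projH X U"
  define W where "W x = U x - P x" for x
  define D where "D = indicat_real {m<..}"
  have PT: "P \<in> tangent_cone X" and minP: "\<And>V. V \<in> tangent_cone X \<Longrightarrow> ip W W \<le> ip (\<lambda>x. U x - V x) (\<lambda>x. U x - V x)"
    using PR unfolding is_proj_def P_def W_def by auto
  have PL: "P \<in> L2" using PT unfolding tangent_cone_def by simp
  have WL: "W \<in> L2" unfolding W_def P_def using W_L2[OF U] .
  have DL: "D \<in> L2" unfolding D_def by (rule ind_L2) simp
  have DT: "D \<in> tangent_cone X" unfolding D_def by (rule D_in_T[OF X])
  have key: "2 * ip W D \<le> t * ip D D" if t: "t > 0" for t
  proof -
    define V where "V x = P x + t * D x" for x
    have tDL: "(\<lambda>x. t * D x) \<in> L2" using L2_scale[OF DL] .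
    have VL: "V \<in> L2" unfolding V_def using L2_add[OF PL tDL] .
    have VT: "V \<in> tangent_cone X"
    proof -
      have "ip V W' \<le> 0" if W': "W' \<in> normal_cone X" for W'
      proof -
        have W'L: "W' \<in> L2" using W' unfolding normal_cone_def by simp
        have "ip V W' = ip P W' + ip (\<lambda>x. t * D x) W'"
          unfolding V_def by (rule ip_L2_add[OF PL tDL W'L])
        also have "\<dots> = ip P W' + t * ip D W'" by (simp add: ip_scale)
        finally have eq: "ip V W' = ip P W' + t * ip D W'" .
        have "ip P W' \<le> 0" using PT W' unfolding tangent_cone_def by blast
        moreover have "ip D W' \<le> 0" using DT W' unfolding tangent_cone_def by blast
        ultimately show ?thesis using eq t by (simp add: mult_nonneg_nonpos add_nonpos_nonpos)
      qed
      then show ?thesis unfolding tangent_cone_def using VL by simp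
    qed
    define Z where "Z x = W x - t * D x" for x
    have ZL: "Z \<in> L2" unfolding Z_def using L2_diff[OF WL tDL] .
    have UV: "(\<lambda>x. U x - V x) = Z" unfolding Z_def V_def W_def by (auto simp: fun_eq_iff)
    have ipZ: "ip Z Y = ip W Y - t * ip D Y" if "Y \<in> L2" for Y
    proof -
      have "ip Z Y = ip W Y - ip (\<lambda>x. t * D x) Y" unfolding Z_def by (rule ip_L2_diff[OF WL tDL that])
      then show ?thesis by (simp add: ip_scale)
    qed
    have "ip Z Z = ip W Z - t * ip D Z" by (rule ipZ[OF ZL])
    also have "ip W Z = ip W W - t * ip D W" using ipZ[OF WL] by (simp add: ip_comm)
    also have "ip D Z = ip D W - t * ip D D" using ipZ[OF DL] by (simp add: ip_comm)
    finally have "ip Z Z = ip W W - 2 * t * ip W D + t * t * ip D D" by (simp add: ip_comm algebra_simps)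
    moreover have "ip W W \<le> ip Z Z" using minP[OF VT] UV by simp
    ultimately have "2 * t * ip W D \<le> t * (t * ip D D)" by (simp add: algebra_simps)
    then show ?thesis using t by (simp add: mult.assoc)
  qed
  have dnn: "0 \<le> ip D D" unfolding ip_def set_lebesgue_integral_def
    by (intro Bochner_Integration.integral_nonneg) (simp add: indicator_def)
  have "ip W D \<le> 0"
  proof (rule ccontr)
    assume "\<not> ip W D \<le> 0"
    then have w: "ip W D > 0" by simp
    define t where "t = ip W D / (ip D D + 1)"
    have t0: "t > 0" unfolding t_def using w dnn by simp
    have "2 * ip W D \<le> t * ip D D" by (rule key[OF t0])
    also have "t * ip D D \<le> t * (ip D D + 1)" using t0 by simp
    also have "t * (ip D D + 1) = ip W D" unfolding t_def using dnn by simp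
    finally show False using w by simp
  qed
  then have "0 \<le> (LINT w:{a<..m}|lebesgue. U w - projH X U w)"
    using ip_W_ind[OF U ab m] unfolding W_def P_def D_def by simp
  then show ?thesis using cond_iff[OF U ab m] by simp
qed

lemma count_formula:
  assumes "0 \<le> y"
  shows "(\<Sum>k\<in>{1..K}. indicat_real {k::nat. real k \<le> y} k) = real (min K (nat \<lfloor>y\<rfloor>))"
proof -
  have "{1..K} \<inter> {k::nat. real k \<le> y} = {1..min K (nat \<lfloor>y\<rfloor>)}"
  proof (intro set_eqI iffI)
    fix k assume "k \<in> {1..K} \<inter> {k::nat. real k \<le> y}"
    then have "k \<le> K" "1 \<le> k" "real k \<le> y" by auto
    then have "int k \<le> \<lfloor>y\<rfloor>" by (simp add: le_floor_iff)
    then have "k \<le> nat \<lfloor>y\<rfloor>" by simp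
    then show "k \<in> {1..min K (nat \<lfloor>y\<rfloor>)}" using \<open>k \<le> K\<close> \<open>1 \<le> k\<close> by simp
  next
    fix k assume "k \<in> {1..min K (nat \<lfloor>y\<rfloor>)}"
    then have "k \<le> K" "1 \<le> k" "k \<le> nat \<lfloor>y\<rfloor>" by auto
    then have "int k \<le> \<lfloor>y\<rfloor>" by simp
    then have "real k \<le> y" by (simp add: le_floor_iff)
    then show "k \<in> {1..K} \<inter> {k::nat. real k \<le> y}" using \<open>k \<le> K\<close> \<open>1 \<le> k\<close> by simp
  qed
  moreover have "(\<Sum>k\<in>{1..K}. indicat_real {k::nat. real k \<le> y} k) = real (card ({1..K} \<inter> {k::nat. real k \<le> y}))"
  proof -
    have "(\<Sum>k\<in>{1..K} \<inter> {k::nat. real k \<le> y}. (1::real)) = (\<Sum>k\<in>{1..K}. if k \<in> {k::nat. real k \<le> y} then 1 else 0)"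
      by (rule sum.inter_restrict) simp
    then show ?thesis by (simp add: indicator_def)
  qed
  ultimately show ?thesis by simp
qed

definition Zn :: "(real \<Rightarrow> real) \<Rightarrow> nat \<Rightarrow> real \<Rightarrow> real" where
  "Zn Z n x = (\<Sum>k\<in>{1..Suc n * Suc n}. indicat_real {x. real k / real (Suc n) \<le> Z x} x) / real (Suc n)"

lemma Zn_eq:
  assumes "0 \<le> Z x"
  shows "Zn Z n x = real (min (Suc n * Suc n) (nat \<lfloor>real (Suc n) * Z x\<rfloor>)) / real (Suc n)"
proof -
  have "indicat_real {x. real k / real (Suc n) \<le> Z x} x = indicat_real {k::nat. real k \<le> real (Suc n) * Z x} k" for k
  proof -
    have "(real k / real (Suc n) \<le> Z x) \<longleftrightarrow> (real k \<le> real (Suc n) * Z x)"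
      by (simp add: divide_le_eq mult.commute)
    then show ?thesis by (simp add: indicator_def)
  qed
  then have "(\<Sum>k\<in>{1..Suc n * Suc n}. indicat_real {x. real k / real (Suc n) \<le> Z x} x)
     = (\<Sum>k\<in>{1..Suc n * Suc n}. indicat_real {k::nat. real k \<le> real (Suc n) * Z x} k)" by simp
  also have "\<dots> = real (min (Suc n * Suc n) (nat \<lfloor>real (Suc n) * Z x\<rfloor>))"
    by (rule count_formula) (use assms in simp)
  finally show ?thesis unfolding Zn_def by simp
qed

lemma Zn_bounds:
  assumes "0 \<le> Z x"
  shows "0 \<le> Zn Z n x" "Zn Z n x \<le> Z x" "Z x \<le> real (Suc n) \<Longrightarrow> Z x - 1 / real (Suc n) \<le> Zn Z n x"
proof -
  define N where "N = real (Suc n)"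
  define y where "y = Z x"
  have N0: "N > 0" unfolding N_def by simp
  have y0: "0 \<le> y" using assms unfolding y_def .
  have eq: "Zn Z n x = real (min (Suc n * Suc n) (nat \<lfloor>N * y\<rfloor>)) / N"
    using Zn_eq[of Z x n, OF assms] unfolding N_def y_def by simp
  show "0 \<le> Zn Z n x" unfolding eq using N0 by simp
  have "real (min (Suc n * Suc n) (nat \<lfloor>N * y\<rfloor>)) \<le> real (nat \<lfloor>N * y\<rfloor>)" by simp
  also have "\<dots> = of_int \<lfloor>N * y\<rfloor>" using y0 N0 by simp
  also have "\<dots> \<le> N * y" by (rule of_int_floor_le)
  finally show "Zn Z n x \<le> Z x" unfolding eq y_def[symmetric] using N0 by (simp add: divide_le_eq mult.commute)
  assume "Z x \<le> real (Suc n)"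
  then have yN: "y \<le> N" unfolding y_def N_def .
  have "nat \<lfloor>N * y\<rfloor> \<le> Suc n * Suc n"
  proof -
    have "N * y \<le> N * N" using yN N0 by simp
    then have "\<lfloor>N * y\<rfloor> \<le> \<lfloor>N * N\<rfloor>" by (rule floor_mono)
    also have "\<lfloor>N * N\<rfloor> = int (Suc n * Suc n)" unfolding N_def by (metis floor_of_nat of_nat_mult)
    finally show ?thesis by (simp only: nat_le_iff)
  qed
  then have "real (min (Suc n * Suc n) (nat \<lfloor>N * y\<rfloor>)) = of_int \<lfloor>N * y\<rfloor>" using y0 N0 by simp
  moreover have "N * y - 1 < of_int \<lfloor>N * y\<rfloor>" by linarith
  ultimately have "N * y - 1 \<le> real (min (Suc n * Suc n) (nat \<lfloor>N * y\<rfloor>))" by linarith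
  then have "(N * y - 1) / N \<le> real (min (Suc n * Suc n) (nat \<lfloor>N * y\<rfloor>)) / N"
    using N0 by (intro divide_right_mono) auto
  moreover have "y - 1 / N = (N * y - 1) / N" using N0 by (simp add: field_simps)
  ultimately have "y - 1 / N \<le> real (min (Suc n * Suc n) (nat \<lfloor>N * y\<rfloor>)) / N" by simp
  then show "Z x - 1 / real (Suc n) \<le> Zn Z n x" unfolding eq y_def N_def by simp
qed

lemma Zn_lim:
  assumes "0 \<le> Z x"
  shows "(\<lambda>n. Zn Z n x) \<longlonglongrightarrow> Z x"
proof (rule tendsto_sandwich[where f = "\<lambda>n. Z x - 1 / real (Suc n)" and h = "\<lambda>n. Z x"])
  obtain n0 :: nat where "Z x \<le> real n0" using real_arch_simple by blast
  then have "\<forall>n\<ge>n0. Z x - 1 / real (Suc n) \<le> Zn Z n x"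
    using Zn_bounds(3)[of Z x, OF assms] by (meson le_SucI of_nat_le_iff order_trans)
  then show "\<forall>\<^sub>F n in sequentially. Z x - 1 / real (Suc n) \<le> Zn Z n x"
    by (auto simp: eventually_sequentially)
  show "\<forall>\<^sub>F n in sequentially. Zn Z n x \<le> Z x" using Zn_bounds(2)[of Z x, OF assms] by simp
  have "(\<lambda>n. 1 / real (Suc n)) \<longlonglongrightarrow> 0" by (rule LIMSEQ_Suc[OF lim_const_over_n])
  then show "(\<lambda>n. Z x - 1 / real (Suc n)) \<longlonglongrightarrow> Z x" using tendsto_diff[OF tendsto_const] by fastforce
qed simp

lemma Zn_meas[measurable]:
  assumes [measurable]: "Z \<in> borel_measurable lebesgue"
  shows "Zn Z n \<in> borel_measurable lebesgue"
  unfolding Zn_def by measurable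

lemma layer:
  fixes W Z :: "real \<Rightarrow> real"
  assumes I[measurable]: "I \<in> sets lebesgue"
    and Wi: "set_integrable lebesgue I W"
    and WZi: "set_integrable lebesgue I (\<lambda>x. W x * Z x)"
    and Zm[measurable]: "Z \<in> borel_measurable lebesgue"
    and Zp: "\<And>x. x \<in> I \<Longrightarrow> 0 \<le> Z x"
    and lev: "\<And>s. s > 0 \<Longrightarrow> (LINT x:(I \<inter> {x. s \<le> Z x})|lebesgue. W x) \<le> 0"
  shows "(LINT x:I|lebesgue. W x * Z x) \<le> 0"
proof -
  define A where "A n k = I \<inter> {x. real k / real (Suc n) \<le> Z x}" for n k :: nat
  have A_sets[measurable]: "A n k \<in> sets lebesgue" for n k unfolding A_def by measurable
  have Wm: "(\<lambda>x. indicat_real I x * W x) \<in> borel_measurable lebesgue"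
    using Wi unfolding set_integrable_def by (simp add: borel_measurable_integrable)
  have iA: "integrable lebesgue (\<lambda>x. indicat_real (A n k) x * W x)" for n k
  proof -
    have "set_integrable lebesgue (A n k) W" by (rule set_integrable_subset[OF Wi]) (auto simp: A_def)
    then show ?thesis unfolding set_integrable_def by simp
  qed
  have step: "(LINT x:I|lebesgue. W x * Zn Z n x) \<le> 0" for n
  proof -
    have pw: "indicat_real I x *\<^sub>R (W x * Zn Z n x) = (\<Sum>k\<in>{1..Suc n * Suc n}. indicat_real (A n k) x * W x) / real (Suc n)" for x
    proof -
      define S where "S = {1..Suc n * Suc n}"
      define B where "B k = {x. real k / real (Suc n) \<le> Z x}" for k :: nat
      have "(\<Sum>k\<in>S. indicat_real (A n k) x * W x) = indicat_real I x * W x * (\<Sum>k\<in>S. indicat_real (B k) x)"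
        unfolding sum_distrib_left
        by (rule sum.cong) (auto simp: A_def B_def indicator_inter_arith)
      moreover have "Zn Z n x = (\<Sum>k\<in>S. indicat_real (B k) x) / real (Suc n)"
        unfolding Zn_def S_def B_def ..
      ultimately show ?thesis unfolding S_def[symmetric] by simp
    qed
    have "(LINT x:I|lebesgue. W x * Zn Z n x) = integral\<^sup>L lebesgue (\<lambda>x. (\<Sum>k\<in>{1..Suc n * Suc n}. indicat_real (A n k) x * W x) / real (Suc n))"
      unfolding set_lebesgue_integral_def using pw by simp
    also have "\<dots> = integral\<^sup>L lebesgue (\<lambda>x. \<Sum>k\<in>{1..Suc n * Suc n}. indicat_real (A n k) x * W x) / real (Suc n)"
      by (rule integral_divide_zero)
    finally have eqL: "(LINT x:I|lebesgue. W x * Zn Z n x) = integral\<^sup>L lebesgue (\<lambda>x. \<Sum>k\<in>{1..Suc n * Suc n}. indicat_real (A n k) x * W x) / real (Suc n)" .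
    have "integral\<^sup>L lebesgue (\<lambda>x. \<Sum>k\<in>{1..Suc n * Suc n}. indicat_real (A n k) x * W x)
        = (\<Sum>k\<in>{1..Suc n * Suc n}. integral\<^sup>L lebesgue (\<lambda>x. indicat_real (A n k) x * W x))"
      by (rule Bochner_Integration.integral_sum) (use iA in auto)
    also have "\<dots> \<le> 0"
    proof (rule sum_nonpos)
      fix k assume k: "k \<in> {1..Suc n * Suc n}"
      have "integral\<^sup>L lebesgue (\<lambda>x. indicat_real (A n k) x * W x) = (LINT x:(I \<inter> {x. real k / real (Suc n) \<le> Z x})|lebesgue. W x)"
        unfolding set_lebesgue_integral_def A_def by simp
      also have "\<dots> \<le> 0" by (rule lev) (use k in auto)
      finally show "integral\<^sup>L lebesgue (\<lambda>x. indicat_real (A n k) x * W x) \<le> 0" .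
    qed
    finally show ?thesis unfolding eqL by (simp add: divide_nonpos_pos)
  qed
  have lim: "(\<lambda>n. integral\<^sup>L lebesgue (\<lambda>x. indicat_real I x * (W x * Zn Z n x)))
      \<longlonglongrightarrow> integral\<^sup>L lebesgue (\<lambda>x. indicat_real I x * (W x * Z x))"
  proof (rule integral_dominated_convergence[where w = "\<lambda>x. \<bar>indicat_real I x * (W x * Z x)\<bar>"])
    show "(\<lambda>x. indicat_real I x * (W x * Z x)) \<in> borel_measurable lebesgue"
      using Wm by (simp add: mult.assoc[symmetric])
    show "(\<lambda>x. indicat_real I x * (W x * Zn Z n x)) \<in> borel_measurable lebesgue" for n
      using Wm by (simp add: mult.assoc[symmetric])
    show "integrable lebesgue (\<lambda>x. \<bar>indicat_real I x * (W x * Z x)\<bar>)"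
      using WZi unfolding set_integrable_def by (simp add: integrable_abs)
    show "AE x in lebesgue. (\<lambda>n. indicat_real I x * (W x * Zn Z n x)) \<longlonglongrightarrow> indicat_real I x * (W x * Z x)"
    proof (rule AE_I2)
      fix x show "(\<lambda>n. indicat_real I x * (W x * Zn Z n x)) \<longlonglongrightarrow> indicat_real I x * (W x * Z x)"
      proof (cases "x \<in> I")
        case True
        then show ?thesis using Zn_lim[of Z x, OF Zp[OF True]] by (intro tendsto_intros) auto
      qed simp
    qed
    show "AE x in lebesgue. norm (indicat_real I x * (W x * Zn Z n x)) \<le> \<bar>indicat_real I x * (W x * Z x)\<bar>" for n
    proof (rule AE_I2)
      fix x show "norm (indicat_real I x * (W x * Zn Z n x)) \<le> \<bar>indicat_real I x * (W x * Z x)\<bar>"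
      proof (cases "x \<in> I")
        case True
        have "\<bar>Zn Z n x\<bar> \<le> \<bar>Z x\<bar>" using Zn_bounds(1,2)[of Z x n, OF Zp[OF True]] by linarith
        then show ?thesis using True by (simp add: abs_mult mult_left_mono)
      qed simp
    qed
  qed
  have "integral\<^sup>L lebesgue (\<lambda>x. indicat_real I x * (W x * Z x)) \<le> 0"
    using LIMSEQ_le_const2[OF lim] step unfolding set_lebesgue_integral_def by simp
  then show ?thesis unfolding set_lebesgue_integral_def by simp
qed

lemma AE_neq: "AE x in lebesgue. x \<noteq> (c::real)"
  by (rule AE_completion[OF AE_lborel_singleton[of c]])

lemma si_meas: "set_integrable M A f \<Longrightarrow> set_borel_measurable M A f"
  unfolding set_integrable_def set_borel_measurable_def by (rule borel_measurable_integrable)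

lemma int_cong_pt:
  fixes W :: "real \<Rightarrow> real"
  assumes "set_integrable lebesgue A W" "B \<subseteq> A" "B \<in> sets lebesgue" "C \<subseteq> A" "C \<in> sets lebesgue"
    and "\<And>x. x \<noteq> c \<Longrightarrow> x \<in> B \<longleftrightarrow> x \<in> C"
  shows "(LINT x:B|lebesgue. W x) = (LINT x:C|lebesgue. W x)"
proof (rule set_integral_cong_set)
  show "set_borel_measurable lebesgue C W" using si_meas[OF set_integrable_subset[OF assms(1) assms(5,4)]] .
  show "set_borel_measurable lebesgue B W" using si_meas[OF set_integrable_subset[OF assms(1) assms(3,2)]] .
  show "AE x in lebesgue. (x \<in> C) = (x \<in> B)" using AE_neq[of c] by eventually_elim (use assms(6) in auto)
qed

lemma split_at:
  fixes W :: "real \<Rightarrow> real"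
  assumes Wi: "set_integrable lebesgue {a<..<b} W" and s: "a < s" "s < b"
  shows "(LINT x:{a<..<b}|lebesgue. W x) = (LINT x:{a<..<s}|lebesgue. W x) + (LINT x:{s<..<b}|lebesgue. W x)"
proof -
  have "(LINT x:{a<..<b}|lebesgue. W x) = (LINT x:{a<..<s} \<union> {s<..<b}|lebesgue. W x)"
    by (rule int_cong_pt[OF Wi, where c=s]) (use s in auto)
  also have "\<dots> = (LINT x:{a<..<s}|lebesgue. W x) + (LINT x:{s<..<b}|lebesgue. W x)"
  proof (rule set_integral_Un)
    show "set_integrable lebesgue {a<..<s} W" by (rule set_integrable_subset[OF Wi]) (use s in auto)
    show "set_integrable lebesgue {s<..<b} W" by (rule set_integrable_subset[OF Wi]) (use s in auto)
  qed auto
  finally show ?thesis .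
qed

lemma final_seg_int:
  fixes W :: "real \<Rightarrow> real"
  assumes ab: "a < b" and Wi: "set_integrable lebesgue {a<..<b} W"
    and G: "\<And>t. t \<in> {a<..<b} \<Longrightarrow> 0 \<le> (LINT x:{a<..<t}|lebesgue. W x)"
    and G0: "(LINT x:{a<..<b}|lebesgue. W x) = 0"
    and S: "S \<subseteq> {a<..<b}" "S \<in> sets lebesgue"
    and up: "\<And>x y. x \<in> S \<Longrightarrow> y \<in> {a<..<b} \<Longrightarrow> x \<le> y \<Longrightarrow> y \<in> S"
  shows "(LINT x:S|lebesgue. W x) \<le> 0"
proof (cases "S = {}")
  case True then show ?thesis by (simp add: set_lebesgue_integral_def)
next
  case False
  define s where "s = Inf S"
  have bdd: "bdd_below S" using S(1) by (meson bdd_below.I greaterThanLessThan_iff less_imp_le subsetD)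
  have sx: "s \<le> x" if "x \<in> S" for x unfolding s_def using that bdd by (simp add: cInf_lower)
  have as: "a \<le> s" unfolding s_def using False S(1) by (intro cInf_greatest) auto
  obtain x0 where x0: "x0 \<in> S" using False by blast
  have sb: "s < b" using sx[OF x0] S(1) x0 by auto
  have inS: "y \<in> S" if "s < y" "y < b" for y
  proof -
    have "Inf S < y" using that(1) unfolding s_def .
    then obtain x where "x \<in> S" "x < y" using False by (meson cInf_lessD)
    then show ?thesis using up[of x y] that as by auto
  qed
  have eqS: "(LINT x:S|lebesgue. W x) = (LINT x:{s<..<b}|lebesgue. W x)"
  proof (rule int_cong_pt[OF Wi, where c=s])
    show "\<And>x. x \<noteq> s \<Longrightarrow> (x \<in> S) = (x \<in> {s<..<b})"
      using inS sx S(1) by (metis greaterThanLessThan_iff order_le_less subsetD)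
  qed (use S as in auto)
  show ?thesis
  proof (cases "a = s")
    case True then show ?thesis using eqS G0 by simp
  next
    case False
    then have as2: "a < s" using as by simp
    have "(LINT x:{a<..<b}|lebesgue. W x) = (LINT x:{a<..<s}|lebesgue. W x) + (LINT x:{s<..<b}|lebesgue. W x)"
      by (rule split_at[OF Wi as2 sb])
    moreover have "0 \<le> (LINT x:{a<..<s}|lebesgue. W x)" using G[of s] as2 sb by simp
    ultimately show ?thesis using eqS G0 by simp
  qed
qed

lemma init_seg_int:
  fixes W :: "real \<Rightarrow> real"
  assumes ab: "a < b" and Wi: "set_integrable lebesgue {a<..<b} W"
    and G: "\<And>t. t \<in> {a<..<b} \<Longrightarrow> 0 \<le> (LINT x:{a<..<t}|lebesgue. W x)"
    and G0: "(LINT x:{a<..<b}|lebesgue. W x) = 0"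
    and S: "S \<subseteq> {a<..<b}" "S \<in> sets lebesgue"
    and dn: "\<And>x y. x \<in> S \<Longrightarrow> y \<in> {a<..<b} \<Longrightarrow> y \<le> x \<Longrightarrow> y \<in> S"
  shows "0 \<le> (LINT x:S|lebesgue. W x)"
proof (cases "S = {}")
  case True then show ?thesis by (simp add: set_lebesgue_integral_def)
next
  case False
  define s where "s = Sup S"
  have bdd: "bdd_above S" using S(1) by (meson bdd_above.I greaterThanLessThan_iff less_imp_le subsetD)
  have sx: "x \<le> s" if "x \<in> S" for x unfolding s_def using that bdd by (simp add: cSup_upper)
  have sb: "s \<le> b" unfolding s_def using False S(1) by (intro cSup_least) auto
  obtain x0 where x0: "x0 \<in> S" using False by blast
  have as: "a < s" using sx[OF x0] S(1) x0 by auto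
  have inS: "y \<in> S" if "a < y" "y < s" for y
  proof -
    have "y < Sup S" using that(2) unfolding s_def .
    then obtain x where "x \<in> S" "y < x" using False by (meson less_cSupD)
    then show ?thesis using dn[of x y] that sb by auto
  qed
  have eqS: "(LINT x:S|lebesgue. W x) = (LINT x:{a<..<s}|lebesgue. W x)"
  proof (rule int_cong_pt[OF Wi, where c=s])
    show "\<And>x. x \<noteq> s \<Longrightarrow> (x \<in> S) = (x \<in> {a<..<s})"
      using inS sx S(1) by (metis greaterThanLessThan_iff order_le_less subsetD)
  qed (use S sb in auto)
  show ?thesis
  proof (cases "s = b")
    case True then show ?thesis using eqS G0 by simp
  next
    case False
    then have "s \<in> {a<..<b}" using as sb by simp
    then show ?thesis using eqS G[of s] by simp
  qed
qed

lemma interval_neg: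
  fixes W Y :: "real \<Rightarrow> real"
  assumes ab: "a < b" and Wi: "set_integrable lebesgue {a<..<b} W"
    and G: "\<And>t. t \<in> {a<..<b} \<Longrightarrow> 0 \<le> (LINT x:{a<..<t}|lebesgue. W x)"
    and G0: "(LINT x:{a<..<b}|lebesgue. W x) = 0"
    and mono: "mono_on {a<..<b} Y"
    and Ym: "(\<lambda>x. indicat_real {a<..<b} x * Y x) \<in> borel_measurable lebesgue"
    and WYi: "set_integrable lebesgue {a<..<b} (\<lambda>x. W x * Y x)"
  shows "(LINT x:{a<..<b}|lebesgue. W x * Y x) \<le> 0"
proof -
  define I where "I = {a<..<b}"
  have I[measurable]: "I \<in> sets lebesgue" unfolding I_def by simp
  define Zp where "Zp x = max (indicat_real I x * Y x) 0" for x
  define Zm where "Zm x = max (- (indicat_real I x * Y x)) 0" for x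
  have Ym': "(\<lambda>x. indicat_real I x * Y x) \<in> borel_measurable lebesgue" using Ym unfolding I_def .
  have Zpm[measurable]: "Zp \<in> borel_measurable lebesgue" unfolding Zp_def using Ym' by measurable
  have Zmm[measurable]: "Zm \<in> borel_measurable lebesgue" unfolding Zm_def using Ym' by measurable
  have Wm: "(\<lambda>x. indicat_real I x * W x) \<in> borel_measurable lebesgue"
    using Wi unfolding set_integrable_def I_def by (simp add: borel_measurable_integrable)
  have WYm: "integrable lebesgue (\<lambda>x. indicat_real I x * (W x * Y x))"
    using WYi unfolding set_integrable_def I_def by simp
  have bound_int: "set_integrable lebesgue I (\<lambda>x. W x * Z x)"
    if Zm: "Z \<in> borel_measurable lebesgue" and Zb: "\<And>x. x \<in> I \<Longrightarrow> \<bar>Z x\<bar> \<le> \<bar>Y x\<bar>" for Z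
    unfolding set_integrable_def
  proof (rule Bochner_Integration.integrable_bound[OF integrable_abs[OF WYm]])
    show "(\<lambda>x. indicat_real I x *\<^sub>R (W x * Z x)) \<in> borel_measurable lebesgue"
      using Wm Zm by (simp add: mult.assoc[symmetric])
    show "AE x in lebesgue. norm (indicat_real I x *\<^sub>R (W x * Z x)) \<le> norm \<bar>indicat_real I x * (W x * Y x)\<bar>"
    proof (rule AE_I2)
      fix x show "norm (indicat_real I x *\<^sub>R (W x * Z x)) \<le> norm \<bar>indicat_real I x * (W x * Y x)\<bar>"
        using Zb[of x] by (cases "x \<in> I") (auto simp: abs_mult mult_left_mono)
    qed
  qed
  have ZpY: "\<bar>Zp x\<bar> \<le> \<bar>Y x\<bar>" if "x \<in> I" for x using that unfolding Zp_def by auto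
  have ZmY: "\<bar>Zm x\<bar> \<le> \<bar>Y x\<bar>" if "x \<in> I" for x using that unfolding Zm_def by auto
  have iP: "set_integrable lebesgue I (\<lambda>x. W x * Zp x)" by (rule bound_int[OF Zpm ZpY])
  have iM: "set_integrable lebesgue I (\<lambda>x. W x * Zm x)" by (rule bound_int[OF Zmm ZmY])
  have iM': "set_integrable lebesgue I (\<lambda>x. - W x * Zm x)"
    using set_integrable_mult_right[OF iM, of "-1"] by simp
  have Wi': "set_integrable lebesgue I W" using Wi unfolding I_def .
  have Wneg: "set_integrable lebesgue I (\<lambda>x. - W x)" using set_integrable_mult_right[OF Wi', of "-1"] by simp
  have GI: "\<And>t. t \<in> {a<..<b} \<Longrightarrow> 0 \<le> (LINT x:{a<..<t}|lebesgue. W x)" by (rule G)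
  have P1: "(LINT x:I|lebesgue. W x * Zp x) \<le> 0"
  proof (rule layer[OF I Wi' iP Zpm])
    show "\<And>x. x \<in> I \<Longrightarrow> 0 \<le> Zp x" unfolding Zp_def by simp
    fix s :: real assume s: "0 < s"
    have eq: "I \<inter> {x. s \<le> Zp x} = {x \<in> I. s \<le> Y x}" unfolding Zp_def using s by (auto simp: indicator_def)
    have meas0: "I \<inter> {x. s \<le> Zp x} \<in> sets lebesgue" by measurable
    have meas: "{x \<in> I. s \<le> Y x} \<in> sets lebesgue" using meas0 eq by simp
    show "(LINT x:(I \<inter> {x. s \<le> Zp x})|lebesgue. W x) \<le> 0"
      unfolding eq
    proof (rule final_seg_int[OF ab Wi G G0])
      show "{x \<in> I. s \<le> Y x} \<subseteq> {a<..<b}" unfolding I_def by auto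
      show "{x \<in> I. s \<le> Y x} \<in> sets lebesgue" by (rule meas)
      fix x y assume xy: "x \<in> {x \<in> I. s \<le> Y x}" "y \<in> {a<..<b}" "x \<le> y"
      then have "Y x \<le> Y y" using mono_onD[OF mono, of x y] unfolding I_def by auto
      then show "y \<in> {x \<in> I. s \<le> Y x}" using xy unfolding I_def by auto
    qed
  qed
  have P2: "(LINT x:I|lebesgue. - W x * Zm x) \<le> 0"
  proof (rule layer[OF I Wneg iM' Zmm])
    show "\<And>x. x \<in> I \<Longrightarrow> 0 \<le> Zm x" unfolding Zm_def by simp
    fix s :: real assume s: "0 < s"
    have eq: "I \<inter> {x. s \<le> Zm x} = {x \<in> I. Y x \<le> - s}" unfolding Zm_def using s by (auto simp: indicator_def)
    have meas: "I \<inter> {x. s \<le> Zm x} \<in> sets lebesgue" by measurable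
    have "0 \<le> (LINT x:{x \<in> I. Y x \<le> - s}|lebesgue. W x)"
    proof (rule init_seg_int[OF ab Wi G G0])
      show "{x \<in> I. Y x \<le> - s} \<subseteq> {a<..<b}" unfolding I_def by auto
      show "{x \<in> I. Y x \<le> - s} \<in> sets lebesgue" using meas eq by simp
      fix x y assume xy: "x \<in> {x \<in> I. Y x \<le> - s}" "y \<in> {a<..<b}" "y \<le> x"
      then have "Y y \<le> Y x" using mono_onD[OF mono, of y x] unfolding I_def by auto
      then show "y \<in> {x \<in> I. Y x \<le> - s}" using xy unfolding I_def by auto
    qed
    moreover have "(LINT x:{x \<in> I. Y x \<le> - s}|lebesgue. - W x) = - (LINT x:{x \<in> I. Y x \<le> - s}|lebesgue. W x)"
      by (simp add: set_lebesgue_integral_def)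
    ultimately have "(LINT x:(I \<inter> {x. s \<le> Zm x})|lebesgue. - W x) \<le> 0" unfolding eq by simp
    then show "(LINT x:(I \<inter> {x. s \<le> Zm x})|lebesgue. - W x) \<le> 0" .
  qed
  have pw: "W x * Y x = W x * Zp x + (- W x * Zm x)" if "x \<in> I" for x
    using that unfolding Zp_def Zm_def by (simp add: max_def algebra_simps)
  have "(LINT x:I|lebesgue. W x * Y x) = (LINT x:I|lebesgue. W x * Zp x + (- W x * Zm x))"
    by (rule set_lebesgue_integral_cong) (use pw in auto)
  also have "\<dots> = (LINT x:I|lebesgue. W x * Zp x) + (LINT x:I|lebesgue. - W x * Zm x)"
    by (rule set_integral_add(2)[OF iP iM'])
  finally show ?thesis using P1 P2 unfolding I_def by simp
qed

lemma ip_W_OmX: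
  assumes U: "U \<in> L2"
    and int: "set_integrable lebesgue Om (\<lambda>x. (U x - projH X U x) * h x)"
  shows "ip (\<lambda>x. U x - projH X U x) h = (LINT x:OmX X|lebesgue. (U x - projH X U x) * h x)"
proof -
  define f where "f x = (U x - projH X U x) * h x" for x
  have iX: "set_integrable lebesgue (OmX X) f"
    unfolding f_def by (rule set_integrable_subset[OF int]) (auto simp: OmX_sub)
  have iC: "set_integrable lebesgue (Om - OmX X) f"
    unfolding f_def by (rule set_integrable_subset[OF int]) auto
  have OmU: "Om = OmX X \<union> (Om - OmX X)" using OmX_sub by blast
  have "ip (\<lambda>x. U x - projH X U x) h = (LINT x:Om|lebesgue. f x)" unfolding ip_def f_def by simp
  also have "\<dots> = (LINT x:OmX X|lebesgue. f x) + (LINT x:Om - OmX X|lebesgue. f x)"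
    by (subst OmU, rule set_integral_Un[OF _ iX iC]) auto
  also have "(LINT x:Om - OmX X|lebesgue. f x) = (LINT x:Om - OmX X|lebesgue. 0)"
    by (rule set_lebesgue_integral_cong) (auto simp: f_def projH_out)
  finally show ?thesis unfolding f_def by simp
qed

lemma bwd_N:
  assumes X: "X \<in> Kcone" and U: "U \<in> L2"
    and cond: "\<forall>a b. max_int X a b \<longrightarrow>
               (\<forall>m\<in>{a<..<b}. projH X U m \<le> (LINT w:{a<..m}|lebesgue. U w) / (m - a))"
  shows "(\<lambda>x. U x - projH X U x) \<in> normal_cone X"
proof -
  define W where "W x = U x - projH X U x" for x
  have WL: "W \<in> L2" unfolding W_def using W_L2[OF U] .
  have XL: "X \<in> L2" and mX: "mono_on Om X" using X unfolding Kcone_def by auto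
  have "ip W (\<lambda>x. Y x - X x) \<le> 0" if Y: "Y \<in> Kcone" for Y
  proof -
    have YL: "Y \<in> L2" and mY: "mono_on Om Y" using Y unfolding Kcone_def by auto
    have "ip W (\<lambda>x. Y x - X x) = ip (\<lambda>x. Y x - X x) W" by (rule ip_comm)
    also have "\<dots> = ip Y W - ip X W" by (rule ip_L2_diff[OF YL XL WL])
    also have "ip X W = 0"
    proof -
      have "ip (\<lambda>x. U x - projH X U x) X = 0"
      proof (rule orth[OF U])
        show "set_integrable lebesgue Om (\<lambda>x. (U x - projH X U x) * X x)"
          using L2_mult_int[OF WL XL] unfolding W_def .
      qed (rule X_const_int)
      then show ?thesis unfolding W_def by (simp add: ip_comm)
    qed
    also have "ip Y W \<le> 0"
    proof -
      have iWY: "set_integrable lebesgue Om (\<lambda>x. (U x - projH X U x) * Y x)"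
        using L2_mult_int[OF WL YL] unfolding W_def .
      have "ip W Y = (LINT x:OmX X|lebesgue. (U x - projH X U x) * Y x)"
        unfolding W_def by (rule ip_W_OmX[OF U iWY])
      also have "\<dots> \<le> 0"
      proof (rule decomp_le)
        show "set_integrable lebesgue (OmX X) (\<lambda>x. (U x - projH X U x) * Y x)"
          by (rule set_integrable_subset[OF iWY]) (auto simp: OmX_sub)
        fix a b assume ab: "max_int X a b"
        have ab2: "a < b" "{a<..<b} \<subseteq> Om" using max_int_01[OF ab] by auto
        have Wi: "set_integrable lebesgue {a<..<b} W" using L2_sub_int[OF WL _ ab2(2)] by simp
        show "(LINT x:{a<..<b}|lebesgue. (U x - projH X U x) * Y x) \<le> 0"
          unfolding W_def[symmetric]
        proof (rule interval_neg[OF ab2(1) Wi])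
          fix t assume t: "t \<in> {a<..<b}"
          have "projH X U t \<le> (LINT w:{a<..t}|lebesgue. U w) / (t - a)" using cond ab t by blast
          then have "0 \<le> (LINT w:{a<..t}|lebesgue. W w)" using cond_iff[OF U ab t] unfolding W_def by simp
          moreover have "(LINT w:{a<..<t}|lebesgue. W w) = (LINT w:{a<..t}|lebesgue. W w)"
            by (rule int_cong_pt[OF Wi, where c=t]) (use t in auto)
          ultimately show "0 \<le> (LINT w:{a<..<t}|lebesgue. W w)" by simp
        next
          show "(LINT x:{a<..<b}|lebesgue. W x) = 0" unfolding W_def by (rule max_int_int_W[OF U ab])
        next
          show "mono_on {a<..<b} Y" by (rule mono_on_subset[OF mY ab2(2)])
        next
          have "(\<lambda>x. indicat_real {a<..<b} x * (indicat_real Om x * Y x)) \<in> borel_measurable lebesgue"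
            using borel_measurable_times[OF borel_measurable_indicator[of "{a<..<b}" lebesgue] L2_D(1)[OF YL]] by simp
          moreover have "(\<lambda>x. indicat_real {a<..<b} x * (indicat_real Om x * Y x)) = (\<lambda>x. indicat_real {a<..<b} x * Y x)"
            using ab2(2) by (auto simp: fun_eq_iff indicator_def)
          ultimately show "(\<lambda>x. indicat_real {a<..<b} x * Y x) \<in> borel_measurable lebesgue" by simp
        next
          show "set_integrable lebesgue {a<..<b} (\<lambda>x. W x * Y x)"
            by (rule set_integrable_subset[OF L2_mult_int[OF WL YL]]) (use ab2 in auto)
        qed
      qed
      finally show ?thesis by (simp add: ip_comm)
    qed
    finally show ?thesis by simp
  qed
  then show ?thesis unfolding normal_cone_def W_def using WL unfolding W_def by simp
qed

lemma UQ_borel: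
  fixes g :: "real \<Rightarrow> real"
  assumes gm[measurable]: "g \<in> borel_measurable borel" and gi: "integrable lborel g"
    and z: "\<And>t. integral\<^sup>L lborel (\<lambda>x. indicat_real {t<..} x * g x) = 0"
  shows "AE x in lborel. g x = 0"
proof -
  define gp where "gp x = ennreal (max (g x) 0)" for x
  define gn where "gn x = ennreal (max (- g x) 0)" for x
  have gpm[measurable]: "gp \<in> borel_measurable lborel" unfolding gp_def by simp
  have gnm[measurable]: "gn \<in> borel_measurable lborel" unfolding gn_def by simp
  have ip: "integrable lborel (\<lambda>x. indicat_real {t<..} x * max (g x) 0)" for t
  proof (rule Bochner_Integration.integrable_bound[OF integrable_abs[OF gi]])
    show "AE x in lborel. norm (indicat_real {t<..} x * max (g x) 0) \<le> norm \<bar>g x\<bar>"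
      by (rule AE_I2) (auto simp: indicator_def)
  qed simp
  have inn: "integrable lborel (\<lambda>x. indicat_real {t<..} x * max (- g x) 0)" for t
  proof (rule Bochner_Integration.integrable_bound[OF integrable_abs[OF gi]])
    show "AE x in lborel. norm (indicat_real {t<..} x * max (- g x) 0) \<le> norm \<bar>g x\<bar>"
      by (rule AE_I2) (auto simp: indicator_def)
  qed simp
  have em: "emeasure (density lborel gp) {t<..} = ennreal (integral\<^sup>L lborel (\<lambda>x. indicat_real {t<..} x * max (g x) 0))"
    "emeasure (density lborel gn) {t<..} = ennreal (integral\<^sup>L lborel (\<lambda>x. indicat_real {t<..} x * max (- g x) 0))" for t
  proof -
    have "emeasure (density lborel gp) {t<..} = (\<integral>\<^sup>+x. gp x * indicator {t<..} x \<partial>lborel)"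
      by (rule emeasure_density) simp_all
    also have "\<dots> = (\<integral>\<^sup>+x. ennreal (indicat_real {t<..} x * max (g x) 0) \<partial>lborel)"
      by (rule nn_integral_cong) (auto simp: gp_def indicator_def)
    also have "\<dots> = ennreal (integral\<^sup>L lborel (\<lambda>x. indicat_real {t<..} x * max (g x) 0))"
      by (rule nn_integral_eq_integral[OF ip]) simp
    finally show "emeasure (density lborel gp) {t<..} = ennreal (integral\<^sup>L lborel (\<lambda>x. indicat_real {t<..} x * max (g x) 0))" .
    have "emeasure (density lborel gn) {t<..} = (\<integral>\<^sup>+x. gn x * indicator {t<..} x \<partial>lborel)"
      by (rule emeasure_density) simp_all
    also have "\<dots> = (\<integral>\<^sup>+x. ennreal (indicat_real {t<..} x * max (- g x) 0) \<partial>lborel)"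
      by (rule nn_integral_cong) (auto simp: gn_def indicator_def)
    also have "\<dots> = ennreal (integral\<^sup>L lborel (\<lambda>x. indicat_real {t<..} x * max (- g x) 0))"
      by (rule nn_integral_eq_integral[OF inn]) simp
    finally show "emeasure (density lborel gn) {t<..} = ennreal (integral\<^sup>L lborel (\<lambda>x. indicat_real {t<..} x * max (- g x) 0))" .
  qed
  have eqi: "integral\<^sup>L lborel (\<lambda>x. indicat_real {t<..} x * max (g x) 0) = integral\<^sup>L lborel (\<lambda>x. indicat_real {t<..} x * max (- g x) 0)" for t
  proof -
    have "integral\<^sup>L lborel (\<lambda>x. indicat_real {t<..} x * max (g x) 0) - integral\<^sup>L lborel (\<lambda>x. indicat_real {t<..} x * max (- g x) 0)
        = integral\<^sup>L lborel (\<lambda>x. indicat_real {t<..} x * max (g x) 0 - indicat_real {t<..} x * max (- g x) 0)"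
      by (rule Bochner_Integration.integral_diff[symmetric, OF ip inn])
    also have "(\<lambda>x. indicat_real {t<..} x * max (g x) 0 - indicat_real {t<..} x * max (- g x) 0) = (\<lambda>x. indicat_real {t<..} x * g x)"
      by (auto simp: fun_eq_iff indicator_def max_def)
    finally show ?thesis using z[of t] by simp
  qed
  have "density lborel gp = density lborel gn"
  proof (rule measure_eqI_lessThan)
    show "sets (density lborel gp) = sets borel" "sets (density lborel gn) = sets borel" by simp_all
    show "emeasure (density lborel gp) {x<..} < \<infinity>" for x using em(1) by simp
    show "emeasure (density lborel gp) {x<..} = emeasure (density lborel gn) {x<..}" for x
      using em eqi by simp
  qed
  then have "AE x in lborel. gp x = gn x"
    using sigma_finite_measure.density_unique_iff[OF sigma_finite_lborel gpm gnm] by simp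
  then show ?thesis
  proof (rule AE_mp, intro AE_I2 impI)
    fix x assume "gp x = gn x"
    then have "max (g x) 0 = max (- g x) 0" unfolding gp_def gn_def by (simp add: ennreal_inj)
    then show "g x = 0" by (auto simp: max_def split: if_splits)
  qed
qed

lemma UQ:
  fixes V :: "real \<Rightarrow> real"
  assumes Vi: "integrable lebesgue V"
    and z: "\<And>t. (LINT x:{t<..}|lebesgue. V x) = 0"
  shows "AE x in lebesgue. V x = 0"
proof -
  have Vm: "V \<in> borel_measurable (completion lborel)" using borel_measurable_integrable[OF Vi] by simp
  obtain g where gm: "g \<in> borel_measurable lborel" and ae: "AE x in lborel. V x = g x"
    using completion_ex_borel_measurable_real[OF Vm] by blast
  have gm2[measurable]: "g \<in> borel_measurable borel" using gm by simp
  have gml: "g \<in> borel_measurable lebesgue" using gm by (rule measurable_completion)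
  have ae2: "AE x in lebesgue. V x = g x" using AE_completion[OF ae] .
  have gil: "integrable lebesgue g" using integrable_cong_AE[OF borel_measurable_integrable[OF Vi] gml ae2] Vi by simp
  have gi: "integrable lborel g" using gil integrable_completion[OF gm] by simp
  have "AE x in lborel. g x = 0"
  proof (rule UQ_borel[OF gm2 gi])
    fix t
    have "integral\<^sup>L lborel (\<lambda>x. indicat_real {t<..} x * g x) = integral\<^sup>L lebesgue (\<lambda>x. indicat_real {t<..} x * g x)"
      by (rule integral_completion[symmetric]) simp
    also have "\<dots> = integral\<^sup>L lebesgue (\<lambda>x. indicat_real {t<..} x * V x)"
    proof (rule integral_cong_AE)
      show "(\<lambda>x. indicat_real {t<..} x * V x) \<in> borel_measurable lebesgue"
        using borel_measurable_times[OF borel_measurable_indicator[of "{t<..}" lebesgue] borel_measurable_integrable[OF Vi]] by simp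
      show "(\<lambda>x. indicat_real {t<..} x * g x) \<in> borel_measurable lebesgue"
        using borel_measurable_times[OF borel_measurable_indicator[of "{t<..}" lebesgue] gml] by simp
      show "AE x in lebesgue. indicat_real {t<..} x * g x = indicat_real {t<..} x * V x"
        using ae2 by eventually_elim simp
    qed
    also have "\<dots> = 0" using z[of t] unfolding set_lebesgue_integral_def by simp
    finally show "integral\<^sup>L lborel (\<lambda>x. indicat_real {t<..} x * g x) = 0" .
  qed
  then have "AE x in lebesgue. g x = 0" by (rule AE_completion)
  then show ?thesis using ae2 by eventually_elim simp
qed

lemma N_test:
  assumes "W' \<in> normal_cone X" "Y \<in> Kcone"
  shows "ip W' (\<lambda>x. Y x - X x) \<le> 0"
proof -
  have "\<forall>Y\<in>Kcone. ip W' (\<lambda>x. Y x - X x) \<le> 0" using assms(1) unfolding normal_cone_def by blast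
  then show ?thesis using assms(2) by blast
qed

lemma N_L2: "W' \<in> normal_cone X \<Longrightarrow> W' \<in> L2"
  unfolding normal_cone_def by simp

lemma L2_comp_bounded:
  assumes XL: "X \<in> L2" and qm[measurable]: "q \<in> borel_measurable borel" and qb: "\<And>v. \<bar>q v\<bar> \<le> B"
  shows "(\<lambda>x. q (X x)) \<in> L2"
proof (rule L2_bounded[where B=B])
  have m1[measurable]: "(\<lambda>x. indicat_real Om x * X x) \<in> borel_measurable lebesgue" using L2_D(1)[OF XL] .
  have "(\<lambda>x. indicat_real Om x * q (indicat_real Om x * X x)) \<in> borel_measurable lebesgue"
    by measurable
  moreover have "(\<lambda>x. indicat_real Om x * q (indicat_real Om x * X x)) = (\<lambda>x. indicat_real Om x * q (X x))"
    by (auto simp: fun_eq_iff indicator_def)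
  ultimately show "(\<lambda>x. indicat_real Om x * q (X x)) \<in> borel_measurable lebesgue" by simp
qed (use qb in auto)

lemma Kcone_add_mono:
  assumes X: "X \<in> Kcone" and qm: "q \<in> borel_measurable borel" and qb: "\<And>v. \<bar>q v\<bar> \<le> B"
    and hm: "\<And>u v. u \<le> v \<Longrightarrow> u + q u \<le> v + q v"
  shows "(\<lambda>x. X x + q (X x)) \<in> Kcone"
proof -
  have XL: "X \<in> L2" and mX: "mono_on Om X" using X unfolding Kcone_def by auto
  have "(\<lambda>x. X x + q (X x)) \<in> L2" using L2_add[OF XL L2_comp_bounded[OF XL qm qb]] .
  moreover have "mono_on Om (\<lambda>x. X x + q (X x))"
  proof (rule mono_onI)
    fix x y assume "x \<in> Om" "y \<in> Om" "x \<le> y"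
    then have "X x \<le> X y" using mono_onD[OF mX] by blast
    then show "X x + q (X x) \<le> X y + q (X y)" by (rule hm)
  qed
  ultimately show ?thesis unfolding Kcone_def by simp
qed

lemma ip_Om_int: "ip f g = integral\<^sup>L lebesgue (\<lambda>x. indicat_real Om x * f x * g x)"
  unfolding ip_def set_lebesgue_integral_def by (simp add: mult.assoc)

lemma pq_lip:
  fixes N k :: real
  assumes N: "N \<ge> 1" and uv: "u \<le> v"
  shows "min (N * max (v - k) 0) 1 - min (N * max (u - k) 0) 1 \<le> N * (v - u)"
    "min (N * max (k - u) 0) 1 - min (N * max (k - v) 0) 1 \<le> N * (v - u)"
proof -
  have a: "max (v - k) 0 - max (u - k) 0 \<le> v - u" "0 \<le> max (v - k) 0 - max (u - k) 0" using uv by (auto simp: max_def)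
  have b: "max (k - u) 0 - max (k - v) 0 \<le> v - u" "0 \<le> max (k - u) 0 - max (k - v) 0" using uv by (auto simp: max_def)
  have c: "min x 1 - min y 1 \<le> x - y" if "y \<le> x" for x y :: real using that by (auto simp: min_def)
  have "N * max (u - k) 0 \<le> N * max (v - k) 0" using a(2) N by (simp add: mult_left_mono)
  then have "min (N * max (v - k) 0) 1 - min (N * max (u - k) 0) 1 \<le> N * max (v - k) 0 - N * max (u - k) 0" by (rule c)
  also have "\<dots> = N * (max (v - k) 0 - max (u - k) 0)" by (simp add: algebra_simps)
  also have "\<dots> \<le> N * (v - u)" using a(1) N by (simp add: mult_left_mono)
  finally show "min (N * max (v - k) 0) 1 - min (N * max (u - k) 0) 1 \<le> N * (v - u)" .
  have "N * max (k - v) 0 \<le> N * max (k - u) 0" using b(2) N by (simp add: mult_left_mono)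
  then have "min (N * max (k - u) 0) 1 - min (N * max (k - v) 0) 1 \<le> N * max (k - u) 0 - N * max (k - v) 0" by (rule c)
  also have "\<dots> = N * (max (k - u) 0 - max (k - v) 0)" by (simp add: algebra_simps)
  also have "\<dots> \<le> N * (v - u)" using b(1) N by (simp add: mult_left_mono)
  finally show "min (N * max (k - u) 0) 1 - min (N * max (k - v) 0) 1 \<le> N * (v - u)" .
qed

lemma lim_pos:
  assumes X: "X \<in> Kcone" and N: "W' \<in> normal_cone X"
  shows "0 \<le> integral\<^sup>L lebesgue (\<lambda>x. indicat_real Om x * W' x * (if k < X x then 1 else 0))"
proof -
  have WL: "W' \<in> L2" using N_L2[OF N] .
  have Wi: "integrable lebesgue (\<lambda>x. indicat_real Om x * W' x)"
    using L2_int[OF WL] unfolding set_integrable_def by simp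
  have Wm: "(\<lambda>x. indicat_real Om x * W' x) \<in> borel_measurable lebesgue" using L2_D(1)[OF WL] .
  have XL: "X \<in> L2" using X unfolding Kcone_def by simp
  define p where "p n v = min (real (Suc n) * max (v - k) 0) 1" for n v
  have pm: "p n \<in> borel_measurable borel" for n unfolding p_def by measurable
  have pb: "\<bar>p n v\<bar> \<le> 1" for n v unfolding p_def by auto
  have pXL: "(\<lambda>x. p n (X x)) \<in> L2" for n using L2_comp_bounded[OF XL pm pb] .
  have step: "0 \<le> integral\<^sup>L lebesgue (\<lambda>x. indicat_real Om x * W' x * p n (X x))" for n
  proof -
    define q where "q v = - p n v / real (Suc n)" for v
    have qm: "q \<in> borel_measurable borel" unfolding q_def using pm by measurable
    have qb: "\<bar>q v\<bar> \<le> 1" for v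
    proof -
      have "\<bar>q v\<bar> = \<bar>p n v\<bar> / real (Suc n)" unfolding q_def by simp
      also have "\<dots> \<le> \<bar>p n v\<bar>"
      proof -
        have "0 \<le> \<bar>p n v\<bar> * real n" by simp
        then show ?thesis by (simp add: divide_le_eq distrib_left)
      qed
      finally show ?thesis using pb[of n v] by simp
    qed
    have hm: "u + q u \<le> v + q v" if "u \<le> v" for u v
    proof -
      have "p n v - p n u \<le> real (Suc n) * (v - u)" unfolding p_def using pq_lip(1)[OF _ that, of "real (Suc n)" k] by simp
      then have "(p n v - p n u) / real (Suc n) \<le> v - u" by (simp add: divide_le_eq mult.commute)
      then show ?thesis unfolding q_def by (simp add: diff_divide_distrib)
    qed
    have "ip W' (\<lambda>x. (X x + q (X x)) - X x) \<le> 0"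
      by (rule N_test[OF N Kcone_add_mono[OF X qm qb hm]])
    then have "ip W' (\<lambda>x. q (X x)) \<le> 0" by simp
    also have "ip W' (\<lambda>x. q (X x)) = - (ip W' (\<lambda>x. p n (X x))) / real (Suc n)"
    proof -
      have "ip W' (\<lambda>x. q (X x)) = ip (\<lambda>x. q (X x)) W'" by (rule ip_comm)
      also have "\<dots> = ip (\<lambda>x. (- 1 / real (Suc n)) * p n (X x)) W'" unfolding q_def by simp
      also have "\<dots> = (- 1 / real (Suc n)) * ip (\<lambda>x. p n (X x)) W'" by (rule ip_scale)
      finally show ?thesis by (simp add: ip_comm)
    qed
    finally have "0 \<le> ip W' (\<lambda>x. p n (X x)) / real (Suc n)" by simp
    then have "0 \<le> ip W' (\<lambda>x. p n (X x))" by (simp add: zero_le_divide_iff)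
    then show ?thesis unfolding ip_Om_int .
  qed
  have lim: "(\<lambda>n. integral\<^sup>L lebesgue (\<lambda>x. indicat_real Om x * W' x * p n (X x)))
     \<longlonglongrightarrow> integral\<^sup>L lebesgue (\<lambda>x. indicat_real Om x * W' x * (if k < X x then 1 else 0))"
  proof (rule integral_dominated_convergence[where w = "\<lambda>x. \<bar>indicat_real Om x * W' x\<bar>"])
    show "(\<lambda>x. indicat_real Om x * W' x * p n (X x)) \<in> borel_measurable lebesgue" for n
    proof -
      have "(\<lambda>x. indicat_real Om x * W' x * (indicat_real Om x * p n (X x))) \<in> borel_measurable lebesgue"
        using borel_measurable_times[OF Wm L2_D(1)[OF pXL[of n]]] by simp
      moreover have "(\<lambda>x. indicat_real Om x * W' x * (indicat_real Om x * p n (X x))) = (\<lambda>x. indicat_real Om x * W' x * p n (X x))"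
        by (auto simp: fun_eq_iff indicator_def)
      ultimately show ?thesis by simp
    qed
    show "(\<lambda>x. indicat_real Om x * W' x * (if k < X x then 1 else 0)) \<in> borel_measurable lebesgue"
    proof -
      have m1[measurable]: "(\<lambda>x. indicat_real Om x * X x) \<in> borel_measurable lebesgue" using L2_D(1)[OF XL] .
      have "(\<lambda>x. indicat_real Om x * W' x * (if k < indicat_real Om x * X x then 1 else 0)) \<in> borel_measurable lebesgue"
        using Wm by measurable
      moreover have "(\<lambda>x. indicat_real Om x * W' x * (if k < indicat_real Om x * X x then 1 else 0)) = (\<lambda>x. indicat_real Om x * W' x * (if k < X x then 1 else 0))"
        by (auto simp: fun_eq_iff indicator_def)
      ultimately show ?thesis by simp
    qed
    show "integrable lebesgue (\<lambda>x. \<bar>indicat_real Om x * W' x\<bar>)" using integrable_abs[OF Wi] .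
    show "AE x in lebesgue. (\<lambda>n. indicat_real Om x * W' x * p n (X x)) \<longlonglongrightarrow> indicat_real Om x * W' x * (if k < X x then 1 else 0)"
    proof (rule AE_I2)
      fix x
      have "(\<lambda>n. p n (X x)) \<longlonglongrightarrow> (if k < X x then 1 else 0)"
      proof (cases "k < X x")
        case True
        obtain n0 :: nat where n0: "1 / (X x - k) \<le> real n0" using real_arch_simple by blast
        have "p n (X x) = 1" if "n \<ge> n0" for n
        proof -
          have "1 \<le> real (Suc n) * (X x - k)"
          proof -
            have "1 / (X x - k) \<le> real (Suc n)" using n0 that by (meson le_SucI of_nat_le_iff order_trans)
            then show ?thesis using True by (simp add: divide_le_eq mult.commute)
          qed
          then show ?thesis unfolding p_def using True by (simp add: max_def)
        qed
        then have "\<forall>\<^sub>F n in sequentially. p n (X x) = 1" by (auto simp: eventually_sequentially)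
        then show ?thesis using True by (simp add: tendsto_eventually)
      next
        case False
        then have "p n (X x) = 0" for n unfolding p_def by (simp add: max_def)
        then show ?thesis using False by simp
      qed
      then show "(\<lambda>n. indicat_real Om x * W' x * p n (X x)) \<longlonglongrightarrow> indicat_real Om x * W' x * (if k < X x then 1 else 0)"
        by (intro tendsto_intros)
    qed
    show "AE x in lebesgue. norm (indicat_real Om x * W' x * p n (X x)) \<le> \<bar>indicat_real Om x * W' x\<bar>" for n
    proof (rule AE_I2)
      fix x have "\<bar>p n (X x)\<bar> \<le> 1" by (rule pb)
      then show "norm (indicat_real Om x * W' x * p n (X x)) \<le> \<bar>indicat_real Om x * W' x\<bar>"
        by (simp add: abs_mult mult_left_le)
    qed
  qed
  show ?thesis using LIMSEQ_le_const[OF lim] step by blast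
qed


lemma lim_neg:
  assumes X: "X \<in> Kcone" and N: "W' \<in> normal_cone X"
  shows "integral\<^sup>L lebesgue (\<lambda>x. indicat_real Om x * W' x * (if X x < k then 1 else 0)) \<le> 0"
proof -
  have WL: "W' \<in> L2" using N_L2[OF N] .
  have Wi: "integrable lebesgue (\<lambda>x. indicat_real Om x * W' x)"
    using L2_int[OF WL] unfolding set_integrable_def by simp
  have Wm: "(\<lambda>x. indicat_real Om x * W' x) \<in> borel_measurable lebesgue" using L2_D(1)[OF WL] .
  have XL: "X \<in> L2" using X unfolding Kcone_def by simp
  define p where "p n v = min (real (Suc n) * max (k - v) 0) 1" for n v
  have pm: "p n \<in> borel_measurable borel" for n unfolding p_def by measurable
  have pb: "\<bar>p n v\<bar> \<le> 1" for n v unfolding p_def by auto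
  have pXL: "(\<lambda>x. p n (X x)) \<in> L2" for n using L2_comp_bounded[OF XL pm pb] .
  have step: "integral\<^sup>L lebesgue (\<lambda>x. indicat_real Om x * W' x * p n (X x)) \<le> 0" for n
  proof -
    define q where "q v = p n v / real (Suc n)" for v
    have qm: "q \<in> borel_measurable borel" unfolding q_def using pm by measurable
    have qb: "\<bar>q v\<bar> \<le> 1" for v
    proof -
      have "\<bar>q v\<bar> = \<bar>p n v\<bar> / real (Suc n)" unfolding q_def by simp
      also have "\<dots> \<le> \<bar>p n v\<bar>"
      proof -
        have "0 \<le> \<bar>p n v\<bar> * real n" by simp
        then show ?thesis by (simp add: divide_le_eq distrib_left)
      qed
      finally show ?thesis using pb[of n v] by simp
    qed
    have hm: "u + q u \<le> v + q v" if "u \<le> v" for u v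
    proof -
      have "p n u - p n v \<le> real (Suc n) * (v - u)" unfolding p_def using pq_lip(2)[OF _ that, of "real (Suc n)" k] by simp
      then have "(p n u - p n v) / real (Suc n) \<le> v - u" by (simp add: divide_le_eq mult.commute)
      then show ?thesis unfolding q_def by (simp add: diff_divide_distrib)
    qed
    have "ip W' (\<lambda>x. (X x + q (X x)) - X x) \<le> 0"
      by (rule N_test[OF N Kcone_add_mono[OF X qm qb hm]])
    then have "ip W' (\<lambda>x. q (X x)) \<le> 0" by simp
    also have "ip W' (\<lambda>x. q (X x)) = (ip W' (\<lambda>x. p n (X x))) / real (Suc n)"
    proof -
      have "ip W' (\<lambda>x. q (X x)) = ip (\<lambda>x. q (X x)) W'" by (rule ip_comm)
      also have "\<dots> = ip (\<lambda>x. (1 / real (Suc n)) * p n (X x)) W'" unfolding q_def by simp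
      also have "\<dots> = (1 / real (Suc n)) * ip (\<lambda>x. p n (X x)) W'" by (rule ip_scale)
      finally show ?thesis by (simp add: ip_comm)
    qed
    finally have "ip W' (\<lambda>x. p n (X x)) / real (Suc n) \<le> 0" by simp
    then have "ip W' (\<lambda>x. p n (X x)) \<le> 0" by (simp add: divide_le_0_iff)
    then show ?thesis unfolding ip_Om_int .
  qed
  have lim: "(\<lambda>n. integral\<^sup>L lebesgue (\<lambda>x. indicat_real Om x * W' x * p n (X x)))
     \<longlonglongrightarrow> integral\<^sup>L lebesgue (\<lambda>x. indicat_real Om x * W' x * (if X x < k then 1 else 0))"
  proof (rule integral_dominated_convergence[where w = "\<lambda>x. \<bar>indicat_real Om x * W' x\<bar>"])
    show "(\<lambda>x. indicat_real Om x * W' x * p n (X x)) \<in> borel_measurable lebesgue" for n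
    proof -
      have "(\<lambda>x. indicat_real Om x * W' x * (indicat_real Om x * p n (X x))) \<in> borel_measurable lebesgue"
        using borel_measurable_times[OF Wm L2_D(1)[OF pXL[of n]]] by simp
      moreover have "(\<lambda>x. indicat_real Om x * W' x * (indicat_real Om x * p n (X x))) = (\<lambda>x. indicat_real Om x * W' x * p n (X x))"
        by (auto simp: fun_eq_iff indicator_def)
      ultimately show ?thesis by simp
    qed
    show "(\<lambda>x. indicat_real Om x * W' x * (if X x < k then 1 else 0)) \<in> borel_measurable lebesgue"
    proof -
      have m1[measurable]: "(\<lambda>x. indicat_real Om x * X x) \<in> borel_measurable lebesgue" using L2_D(1)[OF XL] .
      have "(\<lambda>x. indicat_real Om x * W' x * (if indicat_real Om x * X x < k then 1 else 0)) \<in> borel_measurable lebesgue"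
        using Wm by measurable
      moreover have "(\<lambda>x. indicat_real Om x * W' x * (if indicat_real Om x * X x < k then 1 else 0)) = (\<lambda>x. indicat_real Om x * W' x * (if X x < k then 1 else 0))"
        by (auto simp: fun_eq_iff indicator_def)
      ultimately show ?thesis by simp
    qed
    show "integrable lebesgue (\<lambda>x. \<bar>indicat_real Om x * W' x\<bar>)" using integrable_abs[OF Wi] .
    show "AE x in lebesgue. (\<lambda>n. indicat_real Om x * W' x * p n (X x)) \<longlonglongrightarrow> indicat_real Om x * W' x * (if X x < k then 1 else 0)"
    proof (rule AE_I2)
      fix x
      have "(\<lambda>n. p n (X x)) \<longlonglongrightarrow> (if X x < k then 1 else 0)"
      proof (cases "X x < k")
        case True
        obtain n0 :: nat where n0: "1 / (k - X x) \<le> real n0" using real_arch_simple by blast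
        have "p n (X x) = 1" if "n \<ge> n0" for n
        proof -
          have "1 \<le> real (Suc n) * (k - X x)"
          proof -
            have "1 / (k - X x) \<le> real (Suc n)" using n0 that by (meson le_SucI of_nat_le_iff order_trans)
            then show ?thesis using True by (simp add: divide_le_eq mult.commute)
          qed
          then show ?thesis unfolding p_def using True by (simp add: max_def)
        qed
        then have "\<forall>\<^sub>F n in sequentially. p n (X x) = 1" by (auto simp: eventually_sequentially)
        then show ?thesis using True by (simp add: tendsto_eventually)
      next
        case False
        then have "p n (X x) = 0" for n unfolding p_def by (simp add: max_def)
        then show ?thesis using False by simp
      qed
      then show "(\<lambda>n. indicat_real Om x * W' x * p n (X x)) \<longlonglongrightarrow> indicat_real Om x * W' x * (if X x < k then 1 else 0)"
        by (intro tendsto_intros)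
    qed
    show "AE x in lebesgue. norm (indicat_real Om x * W' x * p n (X x)) \<le> \<bar>indicat_real Om x * W' x\<bar>" for n
    proof (rule AE_I2)
      fix x have "\<bar>p n (X x)\<bar> \<le> 1" by (rule pb)
      then show "norm (indicat_real Om x * W' x * p n (X x)) \<le> \<bar>indicat_real Om x * W' x\<bar>"
        by (simp add: abs_mult mult_left_le)
    qed
  qed
  show ?thesis using LIMSEQ_le_const2[OF lim] step by blast
qed

lemma id_leb[measurable]: "(\<lambda>x::real. x) \<in> borel_measurable lebesgue"
  by (rule borel_to_leb) simp

lemma const_leb[measurable]: "(\<lambda>x::real. c::real) \<in> borel_measurable lebesgue"
  by simp

definition Qf :: "(real \<Rightarrow> real) \<Rightarrow> real \<Rightarrow> real" where
  "Qf W' t = integral\<^sup>L lebesgue (\<lambda>x. indicat_real Om x * W' x * (if t < x then 1 else 0))"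

lemma Qf_le0:
  assumes X: "X \<in> Kcone" and N: "W' \<in> normal_cone X"
  shows "Qf W' t \<le> 0"
proof -
  have "ip W' (\<lambda>x. (X x + indicat_real {t<..} x) - X x) \<le> 0" by (rule N_test[OF N Y_Kcone[OF X]])
  then have "ip W' (indicat_real {t<..}) \<le> 0" by simp
  moreover have "ip W' (indicat_real {t<..}) = Qf W' t" unfolding ip_Om_int Qf_def
    by (rule Bochner_Integration.integral_cong) (auto simp: indicator_def)
  ultimately show ?thesis by simp
qed

lemma int_W'_zero:
  assumes X: "X \<in> Kcone" and N: "W' \<in> normal_cone X"
  shows "integral\<^sup>L lebesgue (\<lambda>x. indicat_real Om x * W' x) = 0"
proof -
  have t: "ip W' (\<lambda>x. c) \<le> 0" for c :: real
  proof -
    have "(\<lambda>x. X x + (\<lambda>v. c) (X x)) \<in> Kcone"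
      by (rule Kcone_add_mono[OF X, where B="\<bar>c\<bar>"]) auto
    from N_test[OF N this] show ?thesis by simp
  qed
  have e: "ip W' (\<lambda>x. c) = c * integral\<^sup>L lebesgue (\<lambda>x. indicat_real Om x * W' x)" for c :: real
    unfolding ip_Om_int by (simp add: mult_ac)
  show ?thesis using t[of 1] t[of "-1"] e[of 1] e[of "-1"] by simp
qed

lemma Qf_zero_C:
  assumes X: "X \<in> Kcone" and N: "W' \<in> normal_cone X" and c: "c \<in> Om" "c \<notin> OmX X"
  shows "Qf W' c = 0"
proof -
  have mX: "mono_on Om X" using X unfolding Kcone_def by simp
  have WL: "W' \<in> L2" using N_L2[OF N] .
  have Wi: "integrable lebesgue (\<lambda>x. indicat_real Om x * W' x)"
    using L2_int[OF WL] unfolding set_integrable_def by simp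
  have Wm: "(\<lambda>x. indicat_real Om x * W' x) \<in> borel_measurable lebesgue" using L2_D(1)[OF WL] .
  have le: "Qf W' c \<le> 0" by (rule Qf_le0[OF X N])
  consider (i) "\<forall>x\<in>Om. c < x \<longrightarrow> X c < X x" | (ii) "\<forall>x\<in>Om. x < c \<longrightarrow> X x < X c"
    | (iii) "\<exists>x1\<in>Om. c < x1 \<and> \<not> X c < X x1" "\<exists>x0\<in>Om. x0 < c \<and> \<not> X x0 < X c" by blast
  then show ?thesis
  proof cases
    case i
    have "integral\<^sup>L lebesgue (\<lambda>x. indicat_real Om x * W' x * (if X c < X x then 1 else 0)) = Qf W' c"
      unfolding Qf_def
    proof (rule Bochner_Integration.integral_cong)
      fix x
      show "indicat_real Om x * W' x * (if X c < X x then 1 else 0) = indicat_real Om x * W' x * (if c < x then 1 else 0)"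
      proof (cases "x \<in> Om")
        case True
        have "X c < X x \<longleftrightarrow> c < x"
        proof
          assume "X c < X x"
          show "c < x"
          proof (rule ccontr)
            assume "\<not> c < x" then have "x \<le> c" by simp
            then have "X x \<le> X c" using mono_onD[OF mX True c(1)] by blast
            then show False using \<open>X c < X x\<close> by simp
          qed
        next
          assume "c < x" then show "X c < X x" using i True by blast
        qed
        then show ?thesis by simp
      qed simp
    qed simp
    then have "0 \<le> Qf W' c" using lim_pos[OF X N, of "X c"] by simp
    then show ?thesis using le by simp
  next
    case ii
    have "integral\<^sup>L lebesgue (\<lambda>x. indicat_real Om x * W' x * (if X x < X c then 1 else 0))
       = integral\<^sup>L lebesgue (\<lambda>x. indicat_real Om x * W' x * (if x < c then 1 else 0))"
    proof (rule Bochner_Integration.integral_cong)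
      fix x
      show "indicat_real Om x * W' x * (if X x < X c then 1 else 0) = indicat_real Om x * W' x * (if x < c then 1 else 0)"
      proof (cases "x \<in> Om")
        case True
        have "X x < X c \<longleftrightarrow> x < c"
        proof
          assume "X x < X c"
          show "x < c"
          proof (rule ccontr)
            assume "\<not> x < c" then have "c \<le> x" by simp
            then have "X c \<le> X x" using mono_onD[OF mX c(1) True] by blast
            then show False using \<open>X x < X c\<close> by simp
          qed
        next
          assume "x < c" then show "X x < X c" using ii True by blast
        qed
        then show ?thesis by simp
      qed simp
    qed simp
    then have Lneg: "integral\<^sup>L lebesgue (\<lambda>x. indicat_real Om x * W' x * (if x < c then 1 else 0)) \<le> 0"
      using lim_neg[OF X N, of "X c"] by simp
    have i1: "integrable lebesgue (\<lambda>x. indicat_real Om x * W' x * (if x < c then 1 else 0))"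
    proof (rule Bochner_Integration.integrable_bound[OF integrable_abs[OF Wi]])
      show "(\<lambda>x. indicat_real Om x * W' x * (if x < c then 1 else 0)) \<in> borel_measurable lebesgue" using Wm by measurable
      show "AE x in lebesgue. norm (indicat_real Om x * W' x * (if x < c then 1 else 0)) \<le> norm \<bar>indicat_real Om x * W' x\<bar>"
        by (rule AE_I2) auto
    qed
    have i2: "integrable lebesgue (\<lambda>x. indicat_real Om x * W' x * (if c < x then 1 else 0))"
    proof (rule Bochner_Integration.integrable_bound[OF integrable_abs[OF Wi]])
      show "(\<lambda>x. indicat_real Om x * W' x * (if c < x then 1 else 0)) \<in> borel_measurable lebesgue" using Wm by measurable
      show "AE x in lebesgue. norm (indicat_real Om x * W' x * (if c < x then 1 else 0)) \<le> norm \<bar>indicat_real Om x * W' x\<bar>"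
        by (rule AE_I2) auto
    qed
    have "integral\<^sup>L lebesgue (\<lambda>x. indicat_real Om x * W' x)
       = integral\<^sup>L lebesgue (\<lambda>x. indicat_real Om x * W' x * (if x < c then 1 else 0) + indicat_real Om x * W' x * (if c < x then 1 else 0))"
    proof (rule integral_cong_AE)
      show "(\<lambda>x. indicat_real Om x * W' x * (if x < c then 1 else 0) + indicat_real Om x * W' x * (if c < x then 1 else 0)) \<in> borel_measurable lebesgue"
        using Wm by measurable
      show "AE x in lebesgue. indicat_real Om x * W' x = indicat_real Om x * W' x * (if x < c then 1 else 0) + indicat_real Om x * W' x * (if c < x then 1 else 0)"
        using AE_neq[of c] by eventually_elim auto
    qed (rule Wm)
    also have "\<dots> = integral\<^sup>L lebesgue (\<lambda>x. indicat_real Om x * W' x * (if x < c then 1 else 0)) + Qf W' c"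
      unfolding Qf_def by (rule Bochner_Integration.integral_add[OF i1 i2])
    finally have "0 = integral\<^sup>L lebesgue (\<lambda>x. indicat_real Om x * W' x * (if x < c then 1 else 0)) + Qf W' c"
      using int_W'_zero[OF X N] by simp
    then show ?thesis using Lneg le by simp
  next
    case iii
    obtain x1 where x1: "x1 \<in> Om" "c < x1" "X x1 \<le> X c" using iii(1) by auto
    obtain x0 where x0: "x0 \<in> Om" "x0 < c" "X c \<le> X x0" using iii(2) by auto
    define e where "e = min (c - x0) (x1 - c)"
    have e0: "e > 0" unfolding e_def using x0 x1 by simp
    have ball: "ball c e \<subseteq> {x0<..<x1}" unfolding e_def by (auto simp: dist_real_def)
    have sub: "{x0<..<x1} \<subseteq> Om" using x0(1) x1(1) unfolding Om_def by auto
    have "\<forall>y\<in>ball c e. X y = X c"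
    proof
      fix y assume "y \<in> ball c e"
      then have y: "y \<in> {x0<..<x1}" using ball by blast
      then have yO: "y \<in> Om" using sub by blast
      have "X x0 \<le> X y" using mono_onD[OF mX x0(1) yO] y by simp
      moreover have "X y \<le> X x1" using mono_onD[OF mX yO x1(1)] y by simp
      moreover have "X x1 \<le> X c" "X c \<le> X x0" using x0 x1 by auto
      moreover have "X x0 \<le> X c" using mono_onD[OF mX x0(1) c(1)] x0(2) by simp
      moreover have "X c \<le> X x1" using mono_onD[OF mX c(1) x1(1)] x1(2) by simp
      ultimately show "X y = X c" by linarith
    qed
    then have "c \<in> OmX X" unfolding OmX_def using c(1) e0 ball sub by blast
    then show ?thesis using c(2) by blast
  qed
qed

lemma Qf_zero:
  assumes X: "X \<in> Kcone" and N: "W' \<in> normal_cone X" and t: "t \<notin> OmX X"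
  shows "Qf W' t = 0"
proof (cases "t \<in> Om")
  case True then show ?thesis using Qf_zero_C[OF X N True t] by simp
next
  case False
  then consider "t \<le> 0" | "1 \<le> t" unfolding Om_def by fastforce
  then show ?thesis
  proof cases
    case 1
    have "Qf W' t = integral\<^sup>L lebesgue (\<lambda>x. indicat_real Om x * W' x)" unfolding Qf_def
      by (rule Bochner_Integration.integral_cong) (use 1 in \<open>auto simp: indicator_def Om_def\<close>)
    then show ?thesis using int_W'_zero[OF X N] by simp
  next
    case 2
    have "(\<lambda>x. indicat_real Om x * W' x * (if t < x then 1 else 0)) = (\<lambda>x. 0)"
      using 2 by (auto simp: fun_eq_iff indicator_def Om_def)
    then show ?thesis unfolding Qf_def by simp
  qed
qed

lemma W'_int_bound:
  assumes WL: "W' \<in> L2" and gm: "g \<in> borel_measurable lebesgue" and gb: "\<And>x. \<bar>g x\<bar> \<le> 1"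
  shows "integrable lebesgue (\<lambda>x. indicat_real Om x * W' x * g x)"
proof (rule Bochner_Integration.integrable_bound)
  show "integrable lebesgue (\<lambda>x. \<bar>indicat_real Om x * W' x\<bar>)"
    using integrable_abs[OF L2_int[OF WL, unfolded set_integrable_def]] by simp
  show "(\<lambda>x. indicat_real Om x * W' x * g x) \<in> borel_measurable lebesgue"
    using borel_measurable_times[OF L2_D(1)[OF WL] gm] by simp
  show "AE x in lebesgue. norm (indicat_real Om x * W' x * g x) \<le> norm \<bar>indicat_real Om x * W' x\<bar>"
  proof (rule AE_I2)
    fix x show "norm (indicat_real Om x * W' x * g x) \<le> norm \<bar>indicat_real Om x * W' x\<bar>"
      using gb[of x] by (simp add: abs_mult mult_left_le)
  qed
qed

lemma N_int_max:
  assumes X: "X \<in> Kcone" and N: "W' \<in> normal_cone X" and ab: "max_int X a b"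
  shows "(LINT x:{a<..<b}|lebesgue. W' x) = 0"
proof -
  have WL: "W' \<in> L2" using N_L2[OF N] .
  have ab2: "0 \<le> a" "b \<le> 1" "a < b" "{a<..<b} \<subseteq> Om" using max_int_01[OF ab] by auto
  have an: "a \<notin> OmX X" and bn: "b \<notin> OmX X" using ab unfolding max_int_def by auto
  have i1: "integrable lebesgue (\<lambda>x. indicat_real Om x * W' x * indicat_real {a<..<b} x)"
    by (rule W'_int_bound[OF WL]) (auto simp: indicator_def)
  have i2: "integrable lebesgue (\<lambda>x. indicat_real Om x * W' x * (if b < x then 1 else 0))"
    by (rule W'_int_bound[OF WL]) auto
  have "Qf W' a = integral\<^sup>L lebesgue (\<lambda>x. indicat_real Om x * W' x * indicat_real {a<..<b} x + indicat_real Om x * W' x * (if b < x then 1 else 0))"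
    unfolding Qf_def
  proof (rule integral_cong_AE)
    show "(\<lambda>x. indicat_real Om x * W' x * (if a < x then 1 else 0)) \<in> borel_measurable lebesgue"
      using borel_measurable_times[OF L2_D(1)[OF WL], of "\<lambda>x. if a < x then 1 else 0"] by simp
    show "(\<lambda>x. indicat_real Om x * W' x * indicat_real {a<..<b} x + indicat_real Om x * W' x * (if b < x then 1 else 0)) \<in> borel_measurable lebesgue"
      using i1 i2 by (simp add: borel_measurable_integrable)
    show "AE x in lebesgue. indicat_real Om x * W' x * (if a < x then 1 else 0) =
        indicat_real Om x * W' x * indicat_real {a<..<b} x + indicat_real Om x * W' x * (if b < x then 1 else 0)"
      using AE_neq[of b] by eventually_elim (use ab2 in \<open>auto simp: indicator_def\<close>)
  qed
  also have "\<dots> = integral\<^sup>L lebesgue (\<lambda>x. indicat_real Om x * W' x * indicat_real {a<..<b} x) + Qf W' b"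
    unfolding Qf_def by (rule Bochner_Integration.integral_add[OF i1 i2])
  also have "integral\<^sup>L lebesgue (\<lambda>x. indicat_real Om x * W' x * indicat_real {a<..<b} x) = (LINT x:{a<..<b}|lebesgue. W' x)"
    unfolding set_lebesgue_integral_def
    by (rule Bochner_Integration.integral_cong) (use ab2 in \<open>auto simp: indicator_def\<close>)
  finally show ?thesis using Qf_zero[OF X N an] Qf_zero[OF X N bn] by simp
qed

lemma V_tail_notin:
  assumes X: "X \<in> Kcone" and N: "W' \<in> normal_cone X" and t: "t \<notin> OmX X"
  shows "integral\<^sup>L lebesgue (\<lambda>x. indicat_real (Om - OmX X) x * W' x * (if t < x then 1 else 0)) = 0"
proof -
  have WL: "W' \<in> L2" using N_L2[OF N] .
  have iX: "integrable lebesgue (\<lambda>x. indicat_real Om x * W' x * (indicat_real (OmX X) x * (if t < x then 1 else 0)))"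
    by (rule W'_int_bound[OF WL]) (auto simp: indicator_def)
  have iC: "integrable lebesgue (\<lambda>x. indicat_real Om x * W' x * ((1 - indicat_real (OmX X) x) * (if t < x then 1 else 0)))"
    by (rule W'_int_bound[OF WL]) (auto simp: indicator_def)
  have "Qf W' t = integral\<^sup>L lebesgue (\<lambda>x. indicat_real Om x * W' x * (indicat_real (OmX X) x * (if t < x then 1 else 0))
      + indicat_real Om x * W' x * ((1 - indicat_real (OmX X) x) * (if t < x then 1 else 0)))"
    unfolding Qf_def by (rule Bochner_Integration.integral_cong) (auto simp: algebra_simps)
  also have "\<dots> = integral\<^sup>L lebesgue (\<lambda>x. indicat_real Om x * W' x * (indicat_real (OmX X) x * (if t < x then 1 else 0)))
      + integral\<^sup>L lebesgue (\<lambda>x. indicat_real Om x * W' x * ((1 - indicat_real (OmX X) x) * (if t < x then 1 else 0)))"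
    by (rule Bochner_Integration.integral_add[OF iX iC])
  also have "integral\<^sup>L lebesgue (\<lambda>x. indicat_real Om x * W' x * (indicat_real (OmX X) x * (if t < x then 1 else 0)))
      = (LINT x:OmX X|lebesgue. W' x * indicat_real {t<..} x)"
    unfolding set_lebesgue_integral_def
    by (rule Bochner_Integration.integral_cong) (use OmX_sub in \<open>auto simp: indicator_def\<close>)
  also have "\<dots> = 0"
  proof (rule decomp_eq)
    show "set_integrable lebesgue (OmX X) (\<lambda>x. W' x * indicat_real {t<..} x)"
      by (rule set_integrable_subset[OF L2_mult_int[OF WL ind_L2[of "{t<..}"]]]) (auto simp: OmX_sub)
    fix a b assume ab: "max_int X a b"
    have "t \<notin> {a<..<b}" using t ab unfolding max_int_def by blast
    then consider "t \<le> a" | "b \<le> t" by fastforce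
    then show "(LINT x:{a<..<b}|lebesgue. W' x * indicat_real {t<..} x) = 0"
    proof cases
      case 1
      have "(LINT x:{a<..<b}|lebesgue. W' x * indicat_real {t<..} x) = (LINT x:{a<..<b}|lebesgue. W' x)"
        by (rule set_lebesgue_integral_cong) (use 1 in \<open>auto simp: indicator_def\<close>)
      then show ?thesis using N_int_max[OF X N ab] by simp
    next
      case 2
      have "(LINT x:{a<..<b}|lebesgue. W' x * indicat_real {t<..} x) = (LINT x:{a<..<b}|lebesgue. 0)"
        by (rule set_lebesgue_integral_cong) (use 2 in \<open>auto simp: indicator_def\<close>)
      then show ?thesis by simp
    qed
  qed
  also have "integral\<^sup>L lebesgue (\<lambda>x. indicat_real Om x * W' x * ((1 - indicat_real (OmX X) x) * (if t < x then 1 else 0)))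
     = integral\<^sup>L lebesgue (\<lambda>x. indicat_real (Om - OmX X) x * W' x * (if t < x then 1 else 0))"
    by (rule Bochner_Integration.integral_cong) (auto simp: indicator_def)
  finally show ?thesis using Qf_zero[OF X N t] by simp
qed

lemma V_tail:
  assumes X: "X \<in> Kcone" and N: "W' \<in> normal_cone X"
  shows "integral\<^sup>L lebesgue (\<lambda>x. indicat_real (Om - OmX X) x * W' x * (if t < x then 1 else 0)) = 0"
proof (cases "t \<in> OmX X")
  case False then show ?thesis by (rule V_tail_notin[OF X N])
next
  case True
  then obtain a b where ab: "max_int X a b" "t \<in> {a<..<b}" using max_int_exists by blast
  have an: "a \<notin> OmX X" using ab unfolding max_int_def by auto
  have sub: "{a<..<b} \<subseteq> OmX X" using ab unfolding max_int_def by auto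
  have "integral\<^sup>L lebesgue (\<lambda>x. indicat_real (Om - OmX X) x * W' x * (if t < x then 1 else 0))
      = integral\<^sup>L lebesgue (\<lambda>x. indicat_real (Om - OmX X) x * W' x * (if a < x then 1 else 0))"
  proof (rule Bochner_Integration.integral_cong)
    fix x
    show "indicat_real (Om - OmX X) x * W' x * (if t < x then 1 else 0) = indicat_real (Om - OmX X) x * W' x * (if a < x then 1 else 0)"
    proof (cases "x \<in> OmX X")
      case False
      then have "x \<notin> {a<..<b}" using sub by blast
      then have "(t < x) = (a < x)" using ab(2) by auto
      then show ?thesis by simp
    qed simp
  qed simp
  also have "\<dots> = 0" by (rule V_tail_notin[OF X N an])
  finally show ?thesis .
qed

lemma V_AE:
  assumes X: "X \<in> Kcone" and N: "W' \<in> normal_cone X"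
  shows "AE x in lebesgue. indicat_real (Om - OmX X) x * W' x = 0"
proof (rule UQ)
  have WL: "W' \<in> L2" using N_L2[OF N] .
  have "integrable lebesgue (\<lambda>x. indicat_real Om x * W' x * indicat_real (- OmX X) x)"
    by (rule W'_int_bound[OF WL]) (auto simp: indicator_def)
  moreover have "(\<lambda>x. indicat_real Om x * W' x * indicat_real (- OmX X) x) = (\<lambda>x. indicat_real (Om - OmX X) x * W' x)"
    by (auto simp: fun_eq_iff indicator_def)
  ultimately show "integrable lebesgue (\<lambda>x. indicat_real (Om - OmX X) x * W' x)" by simp
  fix t
  have "(LINT x:{t<..}|lebesgue. indicat_real (Om - OmX X) x * W' x)
     = integral\<^sup>L lebesgue (\<lambda>x. indicat_real (Om - OmX X) x * W' x * (if t < x then 1 else 0))"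
    unfolding set_lebesgue_integral_def by (rule Bochner_Integration.integral_cong) (auto simp: indicator_def)
  then show "(LINT x:{t<..}|lebesgue. indicat_real (Om - OmX X) x * W' x) = 0" using V_tail[OF X N] by simp
qed

lemma P_ip_N:
  assumes X: "X \<in> Kcone" and U: "U \<in> L2" and N: "W' \<in> normal_cone X"
  shows "ip (projH X U) W' = 0"
proof -
  define P where "P = projH X U"
  have WL: "W' \<in> L2" using N_L2[OF N] .
  have PL: "P \<in> L2" unfolding P_def by (rule projH_L2[OF U])
  have iPW: "set_integrable lebesgue Om (\<lambda>x. P x * W' x)" by (rule L2_mult_int[OF PL WL])
  define f where "f x = P x * W' x" for x
  have iX: "set_integrable lebesgue (OmX X) f"
    unfolding f_def by (rule set_integrable_subset[OF iPW]) (auto simp: OmX_sub)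
  have iC: "set_integrable lebesgue (Om - OmX X) f"
    unfolding f_def by (rule set_integrable_subset[OF iPW]) auto
  have OmU: "Om = OmX X \<union> (Om - OmX X)" using OmX_sub by blast
  have "ip P W' = (LINT x:Om|lebesgue. f x)" unfolding ip_def f_def by simp
  also have "\<dots> = (LINT x:OmX X|lebesgue. f x) + (LINT x:Om - OmX X|lebesgue. f x)"
    by (subst OmU, rule set_integral_Un[OF _ iX iC]) auto
  also have "(LINT x:OmX X|lebesgue. f x) = 0"
  proof (rule decomp_eq[OF iX])
    fix a b assume ab: "max_int X a b"
    define c where "c = (LINT w:{a<..<b}|lebesgue. U w) / (b - a)"
    have "(LINT x:{a<..<b}|lebesgue. f x) = (LINT x:{a<..<b}|lebesgue. c * W' x)"
      by (rule set_lebesgue_integral_cong) (auto simp: f_def P_def projH_in[OF ab] c_def)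
    also have "\<dots> = c * (LINT x:{a<..<b}|lebesgue. W' x)" by (rule set_integral_mult_right)
    also have "\<dots> = 0" using N_int_max[OF X N ab] by simp
    finally show "(LINT x:{a<..<b}|lebesgue. f x) = 0" .
  qed
  also have "(LINT x:Om - OmX X|lebesgue. f x) = integral\<^sup>L lebesgue (\<lambda>x. (indicat_real Om x * U x) * (indicat_real (Om - OmX X) x * W' x))"
    unfolding set_lebesgue_integral_def
    by (rule Bochner_Integration.integral_cong) (auto simp: indicator_def f_def P_def projH_out)
  also have "\<dots> = 0"
  proof (rule integral_eq_zero_AE)
    show "AE x in lebesgue. (indicat_real Om x * U x) * (indicat_real (Om - OmX X) x * W' x) = 0"
      using V_AE[OF X N] by eventually_elim simp
  qed
  finally show ?thesis unfolding P_def by simp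
qed

lemma P_in_T:
  assumes X: "X \<in> Kcone" and U: "U \<in> L2"
  shows "projH X U \<in> tangent_cone X"
  unfolding tangent_cone_def using projH_L2[OF U] P_ip_N[OF X U] by simp

lemma bwd_proj:
  assumes X: "X \<in> Kcone" and U: "U \<in> L2"
    and cond: "\<forall>a b. max_int X a b \<longrightarrow>
               (\<forall>m\<in>{a<..<b}. projH X U m \<le> (LINT w:{a<..m}|lebesgue. U w) / (m - a))"
  shows "is_proj (tangent_cone X) U (projH X U)"
proof -
  define P where "P = projH X U"
  define W where "W x = U x - P x" for x
  have WN: "W \<in> normal_cone X" unfolding W_def P_def by (rule bwd_N[OF X U cond])
  have WL: "W \<in> L2" using N_L2[OF WN] .
  have PL: "P \<in> L2" unfolding P_def by (rule projH_L2[OF U])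
  have PT: "P \<in> tangent_cone X" unfolding P_def by (rule P_in_T[OF X U])
  have WP: "ip P W = 0"
  proof -
    have "ip (\<lambda>x. U x - projH X U x) (projH X U) = 0"
    proof (rule orth[OF U])
      show "set_integrable lebesgue Om (\<lambda>x. (U x - projH X U x) * projH X U x)"
        using L2_mult_int[OF WL PL] unfolding W_def P_def .
      fix a b x y assume "max_int X a b" "x \<in> {a<..<b}" "y \<in> {a<..<b}"
      then show "projH X U x = projH X U y" using projH_in by metis
    qed
    then show ?thesis unfolding W_def P_def by (simp add: ip_comm)
  qed
  have "ip W W \<le> ip (\<lambda>x. U x - V x) (\<lambda>x. U x - V x)" if VT: "V \<in> tangent_cone X" for V
  proof -
    have VL: "V \<in> L2" using VT unfolding tangent_cone_def by simp
    have VW: "ip V W \<le> 0" using VT WN unfolding tangent_cone_def by blast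
    define D where "D x = P x - V x" for x
    have DL: "D \<in> L2" unfolding D_def by (rule L2_diff[OF PL VL])
    have UV: "(\<lambda>x. U x - V x) = (\<lambda>x. W x + D x)" unfolding W_def D_def by (auto simp: fun_eq_iff)
    have WDL: "(\<lambda>x. W x + D x) \<in> L2" by (rule L2_add[OF WL DL])
    have "ip (\<lambda>x. W x + D x) (\<lambda>x. W x + D x) = ip W (\<lambda>x. W x + D x) + ip D (\<lambda>x. W x + D x)"
      by (rule ip_L2_add[OF WL DL WDL])
    also have "ip W (\<lambda>x. W x + D x) = ip W W + ip D W"
      using ip_L2_add[OF WL DL WL] by (simp add: ip_comm)
    also have "ip D (\<lambda>x. W x + D x) = ip D W + ip D D"
      using ip_L2_add[OF WL DL DL] by (simp add: ip_comm)
    also have "ip D W = ip P W - ip V W" unfolding D_def by (rule ip_L2_diff[OF PL VL WL])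
    finally have eq: "ip (\<lambda>x. W x + D x) (\<lambda>x. W x + D x) = ip W W + 2 * (ip P W - ip V W) + ip D D" by simp
    have "0 \<le> ip D D" unfolding ip_def set_lebesgue_integral_def
      by (intro Bochner_Integration.integral_nonneg) (simp add: indicator_def)
    then show ?thesis using eq UV WP VW by simp
  qed
  moreover have W_eq: "(\<lambda>x. U x - projH X U x) = W" by (auto simp: W_def P_def fun_eq_iff)
  ultimately show ?thesis unfolding is_proj_def W_eq using PT unfolding P_def by blast
qed

theorem lemma5p2:
  fixes X U :: "real \<Rightarrow> real"
  assumes "X \<in> Kcone" and "U \<in> L2"
  shows "((\<lambda>x. U x - projH X U x) \<in> normal_cone X \<longleftrightarrow>
            (\<forall>a b. max_int X a b \<longrightarrow>
               (\<forall>m\<in>{a<..<b}. projH X U m \<le> (LINT w:{a<..m}|lebesgue. U w) / (m - a))))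
       \<and> (is_proj (tangent_cone X) U (projH X U) \<longleftrightarrow>
            (\<forall>a b. max_int X a b \<longrightarrow>
               (\<forall>m\<in>{a<..<b}. projH X U m \<le> (LINT w:{a<..m}|lebesgue. U w) / (m - a))))"
proof (intro conjI iffI)
  assume "(\<lambda>x. U x - projH X U x) \<in> normal_cone X"
  then show "\<forall>a b. max_int X a b \<longrightarrow> (\<forall>m\<in>{a<..<b}. projH X U m \<le> (LINT w:{a<..m}|lebesgue. U w) / (m - a))"
    using fwd_N[OF assms] by blast
next
  assume "\<forall>a b. max_int X a b \<longrightarrow> (\<forall>m\<in>{a<..<b}. projH X U m \<le> (LINT w:{a<..m}|lebesgue. U w) / (m - a))"
  then show "(\<lambda>x. U x - projH X U x) \<in> normal_cone X" by (rule bwd_N[OF assms])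
next
  assume "is_proj (tangent_cone X) U (projH X U)"
  then show "\<forall>a b. max_int X a b \<longrightarrow> (\<forall>m\<in>{a<..<b}. projH X U m \<le> (LINT w:{a<..m}|lebesgue. U w) / (m - a))"
    using fwd_proj[OF assms] by blast
next
  assume "\<forall>a b. max_int X a b \<longrightarrow> (\<forall>m\<in>{a<..<b}. projH X U m \<le> (LINT w:{a<..m}|lebesgue. U w) / (m - a))"
  then show "is_proj (tangent_cone X) U (projH X U)" by (rule bwd_proj[OF assms])
qed

end
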